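(* Let $K'/K$ be a finite Galois extension inside $\bar K$. Suppose $M/K$ is obtained by nontrivial strong cluster magnification from a subextension $L/K$ with magnification factor $d$, and suppose $\tilde M$ and $K'$ are linearly disjoint over $K$. Then $MK'/K'$ is obtained by nontrivial strong cluster magnification from $LK'/K'$ with the same magnification factor $d$. Furthermore, $MK'/K$ is obtained by strong cluster magnification from $M/K$ and $LK'/K$ is obtained by strong cluster magnification from $L/K$, and these magnifications are nontrivial if $[K':K]>1$.
   Context: $K$ is a perfect field with a fixed algebraic closure $\bar K$; all extensions are finite and contained in $\bar K$; $\tilde L$ denotes the Galois closure of $L$ over the relevant base field in $\bar K$. Definition: for a base field $E$, $M/E$ is obtained by strong cluster magnification from a subextension $L/E$ ($E\subseteq L\subseteq M$) if $[L:E]>2$, and there is a finite Galois extension $F/E$ with the Galois closure of $L/E$ and $F$ linearly disjoint over $E$ and $LF=M$. $[F:E]$ is the magnification factor; the magnification is nontrivial if $F\ne E$. *)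

theory Defs
  imports "HOL-Computational_Algebra.Polynomial" "HOL-Computational_Algebra.Primes"
begin

text \<open>The ambient type 'a (a field) plays the role of the algebraic closure of K.
  Subfields are subsets of 'a.\<close>

definition subfield :: "'a::field set \<Rightarrow> bool" where
  "subfield F \<longleftrightarrow> 0 \<in> F \<and> 1 \<in> F \<and> (\<forall>x\<in>F. \<forall>y\<in>F. x + y \<in> F \<and> x * y \<in> F)
     \<and> (\<forall>x\<in>F. - x \<in> F) \<and> (\<forall>x\<in>F. x \<noteq> 0 \<longrightarrow> inverse x \<in> F)"

definition lin_indep_over :: "'a::field set \<Rightarrow> 'a set \<Rightarrow> bool" where
  "lin_indep_over E S \<longleftrightarrow> finite S \<and>
     (\<forall>c. (\<forall>b\<in>S. c b \<in> E) \<longrightarrow> (\<Sum>b\<in>S. c b * b) = 0 \<longrightarrow> (\<forall>b\<in>S. c b = 0))"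

definition span_over :: "'a::field set \<Rightarrow> 'a set \<Rightarrow> 'a set" where
  "span_over E S = {\<Sum>b\<in>S. c b * b | c. \<forall>b\<in>S. c b \<in> E}"

definition is_basis_over :: "'a::field set \<Rightarrow> 'a set \<Rightarrow> 'a set \<Rightarrow> bool" where
  "is_basis_over E L B \<longleftrightarrow> finite B \<and> B \<subseteq> L \<and> lin_indep_over E B \<and> span_over E B = L"

definition finite_ext :: "'a::field set \<Rightarrow> 'a set \<Rightarrow> bool" where
  "finite_ext E L \<longleftrightarrow> subfield E \<and> subfield L \<and> E \<subseteq> L \<and> (\<exists>B. is_basis_over E L B)"

text \<open>Degree [L:E] (cardinality of a basis; meaningful for finite extensions).\<close>
definition ext_degree :: "'a::field set \<Rightarrow> 'a set \<Rightarrow> nat" where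
  "ext_degree E L = card (SOME B. is_basis_over E L B)"

definition Aut_over :: "'a::field set \<Rightarrow> 'a set \<Rightarrow> ('a \<Rightarrow> 'a) set" where
  "Aut_over E L = {\<sigma>. bij_betw \<sigma> L L \<and>
      (\<forall>x\<in>L. \<forall>y\<in>L. \<sigma> (x + y) = \<sigma> x + \<sigma> y \<and> \<sigma> (x * y) = \<sigma> x * \<sigma> y) \<and>
      (\<forall>x\<in>E. \<sigma> x = x)}"

definition galois_ext :: "'a::field set \<Rightarrow> 'a set \<Rightarrow> bool" where
  "galois_ext E L \<longleftrightarrow> finite_ext E L \<and> {x\<in>L. \<forall>\<sigma>\<in>Aut_over E L. \<sigma> x = x} = E"

definition galois_closure :: "'a::field set \<Rightarrow> 'a set \<Rightarrow> 'a set" where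
  "galois_closure E L = \<Inter>{N. galois_ext E N \<and> L \<subseteq> N}"

definition compositum :: "'a::field set \<Rightarrow> 'a set \<Rightarrow> 'a set" where
  "compositum A B = \<Inter>{N. subfield N \<and> A \<union> B \<subseteq> N}"

definition lin_disjoint :: "'a::field set \<Rightarrow> 'a set \<Rightarrow> 'a set \<Rightarrow> bool" where
  "lin_disjoint E A B \<longleftrightarrow> (\<forall>S. S \<subseteq> A \<longrightarrow> lin_indep_over E S \<longrightarrow> lin_indep_over B S)"

text \<open>M/E obtained by strong cluster magnification from L/E, witnessed by the Galois extension F/E.
  The magnification factor is [F:E]; it is nontrivial iff F \<noteq> E.\<close>
definition scm_via :: "'a::field set \<Rightarrow> 'a set \<Rightarrow> 'a set \<Rightarrow> 'a set \<Rightarrow> bool" where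
  "scm_via E L M F \<longleftrightarrow> finite_ext E L \<and> finite_ext E M \<and> L \<subseteq> M \<and> ext_degree E L > 2 \<and>
     galois_ext E F \<and> lin_disjoint E (galois_closure E L) F \<and> compositum L F = M"

definition perfect_field :: "'a::field set \<Rightarrow> bool" where
  "perfect_field K \<longleftrightarrow> subfield K \<and>
     ((\<forall>n::nat. n > 0 \<longrightarrow> (of_nat n :: 'a) \<noteq> 0) \<or>
      (\<exists>p::nat. prime p \<and> (of_nat p :: 'a) = 0 \<and> (\<forall>x\<in>K. \<exists>y\<in>K. y ^ p = x)))"

definition alg_closed_type :: "'a::field itself \<Rightarrow> bool" where
  "alg_closed_type _ \<longleftrightarrow> (\<forall>p::'a poly. degree p > 0 \<longrightarrow> (\<exists>x. poly p x = 0))"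

definition algebraic_over :: "'a::field set \<Rightarrow> 'a \<Rightarrow> bool" where
  "algebraic_over K x \<longleftrightarrow> (\<exists>p. p \<noteq> 0 \<and> (\<forall>i. coeff p i \<in> K) \<and> poly p x = 0)"

definition is_alg_closure_of :: "'a::field set \<Rightarrow> bool" where
  "is_alg_closure_of K \<longleftrightarrow> perfect_field K \<and> alg_closed_type TYPE('a) \<and> (\<forall>x. algebraic_over K x)"

end

theory Submission
  imports Defs
begin


lemma sf_0: "subfield E \<Longrightarrow> 0 \<in> E" by (simp add: subfield_def)
lemma sf_1: "subfield E \<Longrightarrow> 1 \<in> E" by (simp add: subfield_def)
lemma sf_add: "subfield E \<Longrightarrow> x \<in> E \<Longrightarrow> y \<in> E \<Longrightarrow> x + y \<in> E" by (simp add: subfield_def)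
lemma sf_mult: "subfield E \<Longrightarrow> x \<in> E \<Longrightarrow> y \<in> E \<Longrightarrow> x * y \<in> E" by (simp add: subfield_def)
lemma sf_uminus: "subfield E \<Longrightarrow> x \<in> E \<Longrightarrow> - x \<in> E" by (simp add: subfield_def)
lemma sf_inverse: "subfield E \<Longrightarrow> x \<in> E \<Longrightarrow> inverse x \<in> E"
  by (cases "x = 0") (auto simp: subfield_def)
lemma sf_diff: "subfield E \<Longrightarrow> x \<in> E \<Longrightarrow> y \<in> E \<Longrightarrow> x - y \<in> E"
  using sf_add[of E x "-y"] sf_uminus[of E y] by simp
lemma sf_divide: "subfield E \<Longrightarrow> x \<in> E \<Longrightarrow> y \<in> E \<Longrightarrow> x / y \<in> E"
  using sf_mult[of E x "inverse y"] sf_inverse[of E y] by (simp add: divide_inverse)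
lemma sf_sum: "subfield E \<Longrightarrow> (\<And>i. i \<in> I \<Longrightarrow> f i \<in> E) \<Longrightarrow> sum f I \<in> E"
  by (induction I rule: infinite_finite_induct) (auto simp: sf_0 sf_add)

lemma subfield_Inter: "(\<And>N. N \<in> NN \<Longrightarrow> subfield N) \<Longrightarrow> subfield (\<Inter>NN)"
  unfolding subfield_def by blast

lemma compositum_subfield: "subfield (compositum A B)"
  unfolding compositum_def by (rule subfield_Inter) auto
lemma compositum_sub1: "A \<subseteq> compositum A B" unfolding compositum_def by auto
lemma compositum_sub2: "B \<subseteq> compositum A B" unfolding compositum_def by auto
lemma compositum_least: "subfield N \<Longrightarrow> A \<subseteq> N \<Longrightarrow> B \<subseteq> N \<Longrightarrow> compositum A B \<subseteq> N"
  unfolding compositum_def by auto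
lemma compositum_eqI:
  assumes "subfield R" "A \<subseteq> R" "B \<subseteq> R" "\<And>N. subfield N \<Longrightarrow> A \<subseteq> N \<Longrightarrow> B \<subseteq> N \<Longrightarrow> R \<subseteq> N"
  shows "compositum A B = R"
proof (rule subset_antisym)
  show "compositum A B \<subseteq> R" by (rule compositum_least[OF assms(1-3)])
  show "R \<subseteq> compositum A B" by (rule assms(4)[OF compositum_subfield compositum_sub1 compositum_sub2])
qed
lemma compositum_mono: "A \<subseteq> A' \<Longrightarrow> B \<subseteq> B' \<Longrightarrow> compositum A B \<subseteq> compositum A' B'"
proof (rule compositum_least[OF compositum_subfield])
  assume "A \<subseteq> A'" "B \<subseteq> B'"
  then show "A \<subseteq> compositum A' B'" "B \<subseteq> compositum A' B'"
    using compositum_sub1[of A' B'] compositum_sub2[of B' A'] by auto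
qed

lemma gc_least: "galois_ext E N \<Longrightarrow> L \<subseteq> N \<Longrightarrow> galois_closure E L \<subseteq> N"
  unfolding galois_closure_def by auto
lemma gc_sub: "L \<subseteq> galois_closure E L" unfolding galois_closure_def by auto
lemma gc_mono: "L \<subseteq> M \<Longrightarrow> galois_closure E L \<subseteq> galois_closure E M"
  unfolding galois_closure_def by auto
lemma gc_subfield: "subfield (galois_closure E L)"
  unfolding galois_closure_def galois_ext_def finite_ext_def by (rule subfield_Inter) auto

lemma lin_disjoint_mono: "lin_disjoint E A B \<Longrightarrow> A' \<subseteq> A \<Longrightarrow> lin_disjoint E A' B"
  unfolding lin_disjoint_def by auto

definition findep :: "'a::field set \<Rightarrow> 'b set \<Rightarrow> ('b \<Rightarrow> 'a) \<Rightarrow> bool" where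
  "findep E I v \<longleftrightarrow> finite I \<and>
     (\<forall>c. (\<forall>i\<in>I. c i \<in> E) \<longrightarrow> (\<Sum>i\<in>I. c i * v i) = 0 \<longrightarrow> (\<forall>i\<in>I. c i = 0))"

lemma lin_indep_findep: "lin_indep_over E S \<longleftrightarrow> findep E S id"
  unfolding lin_indep_over_def findep_def by simp

lemma findepD: "findep E I v \<Longrightarrow> (\<And>i. i \<in> I \<Longrightarrow> c i \<in> E) \<Longrightarrow> (\<Sum>i\<in>I. c i * v i) = 0 \<Longrightarrow> i \<in> I \<Longrightarrow> c i = 0"
  unfolding findep_def by blast

lemma lin_indepD: "lin_indep_over E S \<Longrightarrow> (\<And>i. i \<in> S \<Longrightarrow> c i \<in> E) \<Longrightarrow> (\<Sum>i\<in>S. c i * i) = 0 \<Longrightarrow> i \<in> S \<Longrightarrow> c i = 0"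
  unfolding lin_indep_over_def by blast

lemma findep_inj:
  assumes "findep E I v" "subfield E"
  shows "inj_on v I"
proof (rule inj_onI)
  fix i j assume ij: "i \<in> I" "j \<in> I" "v i = v j"
  show "i = j"
  proof (rule ccontr)
    assume ne: "i \<noteq> j"
    define c where "c = (\<lambda>k. if k = i then 1 else if k = j then -1 else (0::'a))"
    have fin: "finite I" using assms unfolding findep_def by auto
    have "(\<Sum>k\<in>I. c k * v k) = (\<Sum>k\<in>{i,j}. c k * v k)"
      by (rule sum.mono_neutral_right) (use fin ij in \<open>auto simp: c_def\<close>)
    also have "\<dots> = 0" using ne ij by (simp add: c_def)
    finally have "c i = 0"
      by (rule findepD[OF assms(1), rotated]) (use ij assms(2) in \<open>auto simp: c_def sf_0 sf_1 sf_uminus\<close>)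
    then show False by (simp add: c_def)
  qed
qed

lemma findep_image:
  assumes "inj_on v I"
  shows "findep E I v \<longleftrightarrow> lin_indep_over E (v ` I)"
proof
  assume A: "findep E I v"
  show "lin_indep_over E (v ` I)" unfolding lin_indep_over_def
  proof (intro conjI allI impI ballI)
    show "finite (v ` I)" using A unfolding findep_def by auto
    fix c x assume c: "\<forall>b\<in>v ` I. c b \<in> E" and s: "(\<Sum>b\<in>v ` I. c b * b) = 0" and x: "x \<in> v ` I"
    have "(\<Sum>i\<in>I. c (v i) * v i) = 0" using s by (simp add: sum.reindex[OF assms])
    then have "\<forall>i\<in>I. c (v i) = 0" using A c unfolding findep_def by auto
    then show "c x = 0" using x by auto
  qed
next
  assume A: "lin_indep_over E (v ` I)"
  show "findep E I v" unfolding findep_def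
  proof (intro conjI allI impI ballI)
    show "finite I" using A finite_image_iff[OF assms] unfolding lin_indep_over_def by simp
    fix c i assume c: "\<forall>i\<in>I. c i \<in> E" and s: "(\<Sum>i\<in>I. c i * v i) = 0" and i: "i \<in> I"
    define c' where "c' = (\<lambda>x. c (inv_into I v x))"
    have cv: "\<And>i. i \<in> I \<Longrightarrow> c' (v i) = c i" using assms by (simp add: c'_def)
    have "(\<Sum>b\<in>v ` I. c' b * b) = (\<Sum>i\<in>I. c' (v i) * v i)" by (simp add: sum.reindex[OF assms])
    also have "\<dots> = 0" using s cv by simp
    finally have "c' (v i) = 0"
      by (rule lin_indepD[OF A, rotated]) (use c cv i in auto)
    then show "c i = 0" using cv i by simp
  qed
qed

lemma span_memI: "(\<And>b. b \<in> S \<Longrightarrow> c b \<in> E) \<Longrightarrow> x = (\<Sum>b\<in>S. c b * b) \<Longrightarrow> x \<in> span_over E S"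
  unfolding span_over_def by blast

lemma span_memE:
  assumes "x \<in> span_over E S"
  obtains c where "\<And>b. b \<in> S \<Longrightarrow> c b \<in> E" "x = (\<Sum>b\<in>S. c b * b)"
  using assms unfolding span_over_def by blast

lemma span_zero: "subfield E \<Longrightarrow> 0 \<in> span_over E S"
  by (rule span_memI[of S "\<lambda>_. 0"]) (auto simp: sf_0)

lemma span_add:
  assumes "subfield E" "x \<in> span_over E S" "y \<in> span_over E S"
  shows "x + y \<in> span_over E S"
proof -
  obtain c where c: "\<And>b. b \<in> S \<Longrightarrow> c b \<in> E" "x = (\<Sum>b\<in>S. c b * b)" using assms(2) unfolding span_over_def by blast
  obtain d where d: "\<And>b. b \<in> S \<Longrightarrow> d b \<in> E" "y = (\<Sum>b\<in>S. d b * b)" using assms(3) unfolding span_over_def by blast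
  show ?thesis
    by (rule span_memI[of S "\<lambda>b. c b + d b"]) (auto simp: c d sf_add[OF assms(1)] sum.distrib distrib_right)
qed

lemma span_smult:
  assumes "subfield E" "e \<in> E" "x \<in> span_over E S"
  shows "e * x \<in> span_over E S"
proof -
  obtain c where c: "\<And>b. b \<in> S \<Longrightarrow> c b \<in> E" "x = (\<Sum>b\<in>S. c b * b)" using assms(3) unfolding span_over_def by blast
  show ?thesis
    by (rule span_memI[of S "\<lambda>b. e * c b"]) (auto simp: c sf_mult[OF assms(1)] assms(2) sum_distrib_left mult.assoc)
qed

lemma span_sum:
  assumes "subfield E" "\<And>i. i \<in> I \<Longrightarrow> f i \<in> span_over E S"
  shows "sum f I \<in> span_over E S"
  using assms(2)
  by (induction I rule: infinite_finite_induct) (auto simp: span_zero[OF assms(1)] span_add[OF assms(1)])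

lemma span_base:
  assumes "subfield E" "finite S" "b \<in> S"
  shows "b \<in> span_over E S"
proof (rule span_memI[of S "\<lambda>x. if x = b then 1 else 0"])
  show "\<And>x. x \<in> S \<Longrightarrow> (if x = b then 1 else 0) \<in> E" using assms by (auto simp: sf_0 sf_1)
  have "(\<Sum>x\<in>S. (if x = b then 1 else 0) * x) = (\<Sum>x\<in>S. if x = b then b else 0)"
    by (rule sum.cong) auto
  also have "\<dots> = b" using assms by simp
  finally show "b = (\<Sum>x\<in>S. (if x = b then 1 else 0) * x)" by simp
qed

lemma span_mono_field: "E \<subseteq> E' \<Longrightarrow> span_over E S \<subseteq> span_over E' S"
  unfolding span_over_def by blast

lemma span_uminus:
  assumes "subfield E" "x \<in> span_over E S"
  shows "- x \<in> span_over E S"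
  using span_smult[OF assms(1) sf_uminus[OF assms(1) sf_1[OF assms(1)]] assms(2)] by simp

lemma span_diff:
  assumes "subfield E" "x \<in> span_over E S" "y \<in> span_over E S"
  shows "x - y \<in> span_over E S"
  using span_add[OF assms(1,2) span_uminus[OF assms(1,3)]] by simp

lemma span_insert:
  assumes "finite S" "t \<notin> S" "x \<in> span_over E (insert t S)" "subfield E"
  obtains a r where "a \<in> E" "r \<in> span_over E S" "x = a * t + r"
proof -
  obtain c where c: "\<And>b. b \<in> insert t S \<Longrightarrow> c b \<in> E" "x = (\<Sum>b\<in>insert t S. c b * b)"
    using assms(3) unfolding span_over_def by blast
  have "x = c t * t + (\<Sum>b\<in>S. c b * b)" using c(2) assms(1,2) by simp
  moreover have "(\<Sum>b\<in>S. c b * b) \<in> span_over E S" by (rule span_memI[of S c]) (use c in auto)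
  ultimately show ?thesis using that c(1) by blast
qed

lemma span_empty: "span_over E {} = {0}" unfolding span_over_def by auto

section \<open>Steinitz\<close>

lemma steinitz:
  assumes "finite T" "subfield E"
  shows "findep E I v \<Longrightarrow> (\<And>i. i \<in> I \<Longrightarrow> v i \<in> span_over E T) \<Longrightarrow> card I \<le> card T"
  using assms(1)
proof (induction T arbitrary: I v rule: finite_induct)
  case empty
  have "I = {}"
  proof (rule ccontr)
    assume "I \<noteq> {}" then obtain i0 where i0: "i0 \<in> I" by auto
    have "(\<Sum>i\<in>I. (if i = i0 then 1 else 0) * v i) = 0"
      using empty.prems(2) span_empty by (intro sum.neutral) auto
    then have "(if i0 = i0 then 1 else (0::'a)) = 0"
      by (rule findepD[OF empty.prems(1), rotated]) (use i0 assms(2) in \<open>auto simp: sf_0 sf_1\<close>)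
    then show False by simp
  qed
  then show ?case by simp
next
  case (insert t T)
  have "\<forall>i\<in>I. \<exists>ar. fst ar \<in> E \<and> snd ar \<in> span_over E T \<and> v i = fst ar * t + snd ar"
  proof
    fix i assume "i \<in> I"
    then obtain a r where "a \<in> E" "r \<in> span_over E T" "v i = a * t + r"
      using span_insert[OF insert.hyps(1,2) insert.prems(2) assms(2)] by blast
    then show "\<exists>ar. fst ar \<in> E \<and> snd ar \<in> span_over E T \<and> v i = fst ar * t + snd ar" by auto
  qed
  then obtain ar where ar: "\<And>i. i \<in> I \<Longrightarrow> fst (ar i) \<in> E \<and> snd (ar i) \<in> span_over E T \<and> v i = fst (ar i) * t + snd (ar i)"
    using bchoice by metis
  define a where "a = (\<lambda>i. fst (ar i))"
  define r where "r = (\<lambda>i. snd (ar i))"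
  have aE: "\<And>i. i \<in> I \<Longrightarrow> a i \<in> E" and rT: "\<And>i. i \<in> I \<Longrightarrow> r i \<in> span_over E T"
    and vi: "\<And>i. i \<in> I \<Longrightarrow> v i = a i * t + r i" using ar by (auto simp: a_def r_def)
  have finI: "finite I" using insert.prems(1) unfolding findep_def by auto
  show ?case
  proof (cases "\<forall>i\<in>I. a i = 0")
    case True
    then have "card I \<le> card T" using insert.IH[OF insert.prems(1)] vi rT by auto
    then show ?thesis using insert.hyps by simp
  next
    case False
    then obtain i0 where i0: "i0 \<in> I" "a i0 \<noteq> 0" by auto
    define I' where "I' = I - {i0}"
    define v' where "v' = (\<lambda>i. v i - (a i / a i0) * v i0)"
    have v'eq: "v' i = r i - (a i / a i0) * r i0" if "i \<in> I" for i
      using vi[OF that] vi[OF i0(1)] i0(2) by (simp add: v'_def field_simps)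
    have v'T: "v' i \<in> span_over E T" if "i \<in> I'" for i
    proof -
      have iI: "i \<in> I" using that by (simp add: I'_def)
      have "r i - (a i / a i0) * r i0 \<in> span_over E T"
        by (rule span_diff[OF assms(2) rT[OF iI] span_smult[OF assms(2) sf_divide[OF assms(2) aE[OF iI] aE[OF i0(1)]] rT[OF i0(1)]]])
      then show ?thesis using v'eq[OF iI] by simp
    qed
    have ind: "findep E I' v'" unfolding findep_def
    proof (intro conjI allI impI ballI)
      show "finite I'" using finI by (simp add: I'_def)
      fix c i assume c: "\<forall>i\<in>I'. c i \<in> E" and s: "(\<Sum>i\<in>I'. c i * v' i) = 0" and i: "i \<in> I'"
      define c' where "c' = (\<lambda>j. if j = i0 then - (\<Sum>k\<in>I'. c k * (a k / a i0)) else c j)"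
      have e1: "(\<Sum>j\<in>I'. c j * v' j) = (\<Sum>j\<in>I'. c j * v j) - (\<Sum>j\<in>I'. c j * (a j / a i0)) * v i0"
        by (simp add: v'_def right_diff_distrib sum_subtractf sum_distrib_right mult.assoc)
      have e2: "(\<Sum>j\<in>I. c' j * v j) = c' i0 * v i0 + (\<Sum>j\<in>I'. c' j * v j)"
        using finI i0(1) unfolding I'_def by (simp add: sum.remove)
      have e3: "(\<Sum>j\<in>I'. c' j * v j) = (\<Sum>j\<in>I'. c j * v j)"
        by (rule sum.cong) (auto simp: c'_def I'_def)
      have e4: "c' i0 = - (\<Sum>k\<in>I'. c k * (a k / a i0))" by (simp add: c'_def)
      have "(\<Sum>j\<in>I. c' j * v j) = 0" using e1 e2 e3 e4 s by simp
      then have "c' i = 0"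
        apply (rule findepD[OF insert.prems(1), rotated])
        using i I'_def apply simp
        subgoal for j using c aE i0 by (auto simp: c'_def I'_def
          intro!: sf_uminus[OF assms(2)] sf_sum[OF assms(2)] sf_mult[OF assms(2)] sf_divide[OF assms(2)])
        done
      then show "c i = 0" using i by (simp add: c'_def I'_def)
    qed
    have "card I' \<le> card T" using insert.IH[OF ind v'T] .
    moreover have "card I = Suc (card I')" using card_Suc_Diff1[OF finI i0(1)] by (simp add: I'_def)
    ultimately show ?thesis using insert.hyps by simp
  qed
qed



lemma sum_closed:
  assumes "0 \<in> W" "\<And>x y. x \<in> W \<Longrightarrow> y \<in> W \<Longrightarrow> x + y \<in> W" "\<And>i. i \<in> I \<Longrightarrow> f i \<in> W"
  shows "sum f I \<in> W"
  using assms(3) by (induction I rule: infinite_finite_induct) (auto simp: assms(1,2))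

lemma basis_finite: "is_basis_over E V B \<Longrightarrow> finite B" by (simp add: is_basis_over_def)
lemma basis_sub: "is_basis_over E V B \<Longrightarrow> B \<subseteq> V" by (simp add: is_basis_over_def)
lemma basis_indep: "is_basis_over E V B \<Longrightarrow> lin_indep_over E B" by (simp add: is_basis_over_def)
lemma basis_span: "is_basis_over E V B \<Longrightarrow> span_over E B = V" by (simp add: is_basis_over_def)
lemma indep_finite: "lin_indep_over E S \<Longrightarrow> finite S" by (simp add: lin_indep_over_def)

lemma span_sub_base: "subfield E \<Longrightarrow> finite S \<Longrightarrow> S \<subseteq> span_over E S"
  using span_base by blast

lemma insert_indep:
  assumes E: "subfield E" and S: "lin_indep_over E S" and w: "w \<notin> span_over E S"
  shows "lin_indep_over E (insert w S)"
proof -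
  have fin: "finite S" using S by (rule indep_finite)
  have wS: "w \<notin> S" using w span_sub_base[OF E fin] by auto
  show ?thesis unfolding lin_indep_over_def
  proof (intro conjI allI impI ballI)
    show "finite (insert w S)" using fin by simp
    fix c x assume c: "\<forall>b\<in>insert w S. c b \<in> E" and s: "(\<Sum>b\<in>insert w S. c b * b) = 0"
      and x: "x \<in> insert w S"
    have s2: "c w * w + (\<Sum>b\<in>S. c b * b) = 0" using s fin wS by simp
    have cw: "c w = 0"
    proof (rule ccontr)
      assume ne: "c w \<noteq> 0"
      have h: "c w * w = - (\<Sum>b\<in>S. c b * b)" using s2 by (simp add: eq_neg_iff_add_eq_0)
      have h2: "w = - (\<Sum>b\<in>S. c b * b) / c w" using h ne by (simp add: field_simps)
      have h3: "(\<Sum>b\<in>S. (- c b / c w) * b) = (\<Sum>b\<in>S. - (c b * b) / c w)"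
        by (rule sum.cong) (auto simp: field_simps ne)
      have "w = - (\<Sum>b\<in>S. c b * b) / c w" by (rule h2)
      also have "\<dots> = (\<Sum>b\<in>S. - (c b * b)) / c w" by (simp add: sum_negf)
      also have "\<dots> = (\<Sum>b\<in>S. - (c b * b) / c w)" by (rule sum_divide_distrib)
      also have "\<dots> = (\<Sum>b\<in>S. (- c b / c w) * b)" by (rule h3[symmetric])
      finally have "w = (\<Sum>b\<in>S. (- c b / c w) * b)" .
      moreover have "(\<Sum>b\<in>S. (- c b / c w) * b) \<in> span_over E S"
        by (rule span_memI[OF _ refl]) (use c E in \<open>auto intro!: sf_divide sf_uminus\<close>)
      ultimately show False using w by simp
    qed
    then have "(\<Sum>b\<in>S. c b * b) = 0" using s2 by simp
    then have "\<forall>b\<in>S. c b = 0" using S c unfolding lin_indep_over_def by auto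
    then show "c x = 0" using x cw by auto
  qed
qed

lemma indep_card_le:
  assumes "subfield E" "is_basis_over E V B" "S \<subseteq> V" "lin_indep_over E S"
  shows "card S \<le> card B"
  using steinitz[OF basis_finite[OF assms(2)] assms(1), of S id] assms
  unfolding lin_indep_findep by (auto simp: basis_span)

lemma basis_card_eq:
  assumes "subfield E" "is_basis_over E V B1" "is_basis_over E V B2"
  shows "card B1 = card B2"
  using indep_card_le[OF assms(1,2) basis_sub[OF assms(3)] basis_indep[OF assms(3)]]
    indep_card_le[OF assms(1,3) basis_sub[OF assms(2)] basis_indep[OF assms(2)]] by simp

lemma ext_degree_eq:
  assumes "subfield E" "is_basis_over E V B"
  shows "ext_degree E V = card B"
  unfolding ext_degree_def using someI[of "is_basis_over E V", OF assms(2)] basis_card_eq[OF assms(1)] assms(2)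
  by blast

lemma subspace_basis:
  assumes E: "subfield E" and B: "is_basis_over E V B" and WV: "W \<subseteq> V" and W0: "0 \<in> W"
    and Wadd: "\<And>x y. x \<in> W \<Longrightarrow> y \<in> W \<Longrightarrow> x + y \<in> W"
    and Wsm: "\<And>e x. e \<in> E \<Longrightarrow> x \<in> W \<Longrightarrow> e * x \<in> W"
  shows "\<exists>S. is_basis_over E W S"
proof -
  define P where "P = (\<lambda>S. S \<subseteq> W \<and> lin_indep_over E S)"
  have P0: "P {}" by (simp add: P_def lin_indep_over_def)
  have bd: "\<forall>S. P S \<longrightarrow> card S < Suc (card B)"
  proof (intro allI impI)
    fix S assume "P S"
    then have "S \<subseteq> V" "lin_indep_over E S" using WV by (auto simp: P_def)
    then show "card S < Suc (card B)" using indep_card_le[OF E B] by (simp add: less_Suc_eq_le)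
  qed
  obtain S where S: "P S" and Smax: "\<And>S'. P S' \<Longrightarrow> card S' \<le> card S"
    using ex_has_greatest_nat[OF P0 bd] by blast
  have SW: "S \<subseteq> W" and Si: "lin_indep_over E S" using S by (auto simp: P_def)
  have fin: "finite S" using Si by (rule indep_finite)
  have spW: "span_over E S \<subseteq> W"
  proof
    fix x assume "x \<in> span_over E S"
    then obtain c where c: "\<And>b. b \<in> S \<Longrightarrow> c b \<in> E" "x = (\<Sum>b\<in>S. c b * b)" unfolding span_over_def by blast
    show "x \<in> W" unfolding c(2) by (rule sum_closed[OF W0 Wadd]) (use c SW Wsm in auto)
  qed
  have "W \<subseteq> span_over E S"
  proof
    fix w assume w: "w \<in> W"
    show "w \<in> span_over E S"
    proof (rule ccontr)
      assume nw: "w \<notin> span_over E S"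
      have "P (insert w S)" using insert_indep[OF E Si nw] w SW by (auto simp: P_def)
      moreover have "w \<notin> S" using nw span_sub_base[OF E fin] by auto
      ultimately show False using Smax[of "insert w S"] fin by simp
    qed
  qed
  then have "is_basis_over E W S" using spW fin SW Si by (auto simp: is_basis_over_def)
  then show ?thesis by blast
qed

section \<open>Inverses of algebraic elements\<close>

lemma poly_in_ring:
  assumes "0 \<in> R" "\<And>x y. x \<in> R \<Longrightarrow> y \<in> R \<Longrightarrow> x + y \<in> R" "\<And>x y. x \<in> R \<Longrightarrow> y \<in> R \<Longrightarrow> x * y \<in> R"
    "K \<subseteq> R" "x \<in> R"
  shows "(\<forall>i. coeff q i \<in> K) \<Longrightarrow> poly q x \<in> R"
proof (induction q rule: pCons_induct)
  case 0 then show ?case using assms(1) by simp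
next
  case (pCons a p)
  have "a \<in> K" using pCons.prems[rule_format, of 0] by simp
  moreover have "\<forall>i. coeff p i \<in> K" using pCons.prems[rule_format, of "Suc _"] by simp
  ultimately show ?case using pCons.IH assms by auto
qed

lemma alg_inv:
  assumes K: "subfield K" and R0: "0 \<in> R" and Radd: "\<And>x y. x \<in> R \<Longrightarrow> y \<in> R \<Longrightarrow> x + y \<in> R"
    and Rmul: "\<And>x y. x \<in> R \<Longrightarrow> y \<in> R \<Longrightarrow> x * y \<in> R"
    and KR: "K \<subseteq> R" and x: "x \<in> R" "x \<noteq> 0"
  shows "p \<noteq> 0 \<Longrightarrow> (\<forall>i. coeff p i \<in> K) \<Longrightarrow> poly p x = 0 \<Longrightarrow> inverse x \<in> R"
proof (induction p rule: pCons_induct)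
  case 0 then show ?case by simp
next
  case (pCons a q)
  have aK: "a \<in> K" using pCons.prems(2)[rule_format, of 0] by simp
  have qK: "\<forall>i. coeff q i \<in> K" using pCons.prems(2)[rule_format, of "Suc _"] by simp
  have eq: "a + x * poly q x = 0" using pCons.prems(3) by simp
  show ?case
  proof (cases "a = 0")
    case True
    then have "q \<noteq> 0" using pCons.prems(1) by auto
    moreover have "poly q x = 0" using eq True x(2) by simp
    ultimately show ?thesis using pCons.IH qK by blast
  next
    case False
    have "inverse x = poly q x * (- inverse a)"
      using eq False x(2) by (simp add: field_simps eq_neg_iff_add_eq_0 add.commute)
    moreover have "poly q x \<in> R" by (rule poly_in_ring[OF R0 Radd Rmul KR x(1) qK])
    moreover have "- inverse a \<in> R" using KR aK sf_uminus[OF K sf_inverse[OF K aK]] by auto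
    ultimately show ?thesis using Rmul[of "poly q x" "- inverse a"] by simp
  qed
qed

lemma alg_inv':
  assumes K: "subfield K" and R0: "0 \<in> R" and Radd: "\<And>x y. x \<in> R \<Longrightarrow> y \<in> R \<Longrightarrow> x + y \<in> R"
    and Rmul: "\<And>x y. x \<in> R \<Longrightarrow> y \<in> R \<Longrightarrow> x * y \<in> R"
    and KR: "K \<subseteq> R" and x: "x \<in> R" and alg: "algebraic_over K x"
  shows "inverse x \<in> R"
proof (cases "x = 0")
  case True then show ?thesis using R0 by simp
next
  case False
  obtain p where "p \<noteq> 0" "\<forall>i. coeff p i \<in> K" "poly p x = 0" using alg unfolding algebraic_over_def by blast
  then show ?thesis using alg_inv[OF K R0 Radd Rmul KR x False] by blast
qed

section \<open>Span of a basis over a bigger field\<close>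

lemma span_field:
  assumes K: "subfield K" and E: "subfield E" and KE: "K \<subseteq> E" and B: "is_basis_over K A B"
    and A: "subfield A" and alg: "\<forall>x. algebraic_over K x"
  shows "subfield (span_over E B) \<and> A \<subseteq> span_over E B \<and> E \<subseteq> span_over E B \<and> compositum A E = span_over E B"
proof -
  define R where "R = span_over E B"
  have fin: "finite B" and BA: "B \<subseteq> A" using B by (auto simp: is_basis_over_def)
  have AR: "A \<subseteq> R" using span_mono_field[OF KE, of B] basis_span[OF B] by (simp add: R_def)
  have R0: "0 \<in> R" by (simp add: R_def span_zero[OF E])
  have Radd: "\<And>x y. x \<in> R \<Longrightarrow> y \<in> R \<Longrightarrow> x + y \<in> R" by (simp add: R_def span_add[OF E])
  have Rsm: "\<And>e x. e \<in> E \<Longrightarrow> x \<in> R \<Longrightarrow> e * x \<in> R" by (simp add: R_def span_smult[OF E])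
  have R1: "1 \<in> R" using AR sf_1[OF A] by auto
  have ER: "E \<subseteq> R" using Rsm[OF _ R1] by auto
  have Rsum: "\<And>I f. (\<And>i. i \<in> I \<Longrightarrow> f i \<in> R) \<Longrightarrow> sum f I \<in> R"
    by (rule sum_closed[OF R0 Radd])
  have bR: "b * y \<in> R" if b: "b \<in> B" and y: "y \<in> R" for b y
  proof -
    obtain d where d: "\<And>b. b \<in> B \<Longrightarrow> d b \<in> E" "y = (\<Sum>b\<in>B. d b * b)" using y unfolding R_def unfolding span_over_def by blast
    have "b * y = (\<Sum>b'\<in>B. d b' * (b * b'))" by (simp add: d(2) sum_distrib_left mult.left_commute)
    also have "\<dots> \<in> R" apply (rule Rsum) apply (rule Rsm) using d(1) BA b AR sf_mult[OF A] by (auto simp: subset_iff)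
    finally show ?thesis .
  qed
  have Rmul: "\<And>x y. x \<in> R \<Longrightarrow> y \<in> R \<Longrightarrow> x * y \<in> R"
  proof -
    fix x y assume x: "x \<in> R" and y: "y \<in> R"
    obtain c where c: "\<And>b. b \<in> B \<Longrightarrow> c b \<in> E" "x = (\<Sum>b\<in>B. c b * b)" using x unfolding R_def unfolding span_over_def by blast
    have "x * y = (\<Sum>b\<in>B. c b * (b * y))" by (simp add: c(2) sum_distrib_right mult.assoc)
    also have "\<dots> \<in> R" apply (rule Rsum) apply (rule Rsm) using c(1) bR y by auto
    finally show "x * y \<in> R" .
  qed
  have KR: "K \<subseteq> R" using KE ER by auto
  have sfR: "subfield R" unfolding subfield_def
    using R0 R1 Radd Rmul alg_inv'[OF K R0 Radd Rmul KR _ alg[rule_format]]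
      span_uminus[OF E] by (auto simp: R_def)
  have "compositum A E = R"
  proof (rule compositum_eqI[OF sfR AR ER])
    fix N assume N: "subfield N" "A \<subseteq> N" "E \<subseteq> N"
    show "R \<subseteq> N"
    proof
      fix x assume "x \<in> R"
      then obtain c where c: "\<And>b. b \<in> B \<Longrightarrow> c b \<in> E" "x = (\<Sum>b\<in>B. c b * b)" unfolding R_def unfolding span_over_def by blast
      show "x \<in> N" unfolding c(2) using c(1) BA N by (intro sf_sum[OF N(1)] sf_mult[OF N(1)]) auto
    qed
  qed
  then show ?thesis using sfR AR ER by (simp add: R_def)
qed

lemma basis_ext:
  assumes K: "subfield K" and E: "subfield E" and KE: "K \<subseteq> E" and B: "is_basis_over K A B"
    and A: "subfield A" and alg: "\<forall>x. algebraic_over K x" and BE: "lin_indep_over E B"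
  shows "is_basis_over E (compositum A E) B" "finite_ext E (compositum A E)"
    "compositum A E = span_over E B"
proof -
  note sf = span_field[OF K E KE B A alg]
  show b: "is_basis_over E (compositum A E) B"
    using sf BE basis_finite[OF B] basis_sub[OF B] by (auto simp: is_basis_over_def)
  show "finite_ext E (compositum A E)" unfolding finite_ext_def
    using sf b E by auto
  show "compositum A E = span_over E B" using sf by simp
qed

section \<open>Products of bases\<close>

lemma prod_indep:
  assumes K: "subfield K" and F: "subfield F" and KF: "K \<subseteq> F" and A: "lin_indep_over F A"
    and BF: "B \<subseteq> F" and B: "lin_indep_over K B"
  shows "findep K (A \<times> B) (\<lambda>p. fst p * snd p)"
  unfolding findep_def
proof (intro conjI allI impI ballI)
  have fA: "finite A" and fB: "finite B" using A B by (auto simp: lin_indep_over_def)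
  show "finite (A \<times> B)" using fA fB by simp
  fix c p assume c: "\<forall>i\<in>A \<times> B. c i \<in> K" and s: "(\<Sum>i\<in>A \<times> B. c i * (fst i * snd i)) = 0" and p: "p \<in> A \<times> B"
  have e1: "(\<Sum>a\<in>A. \<Sum>b\<in>B. c (a,b) * (a * b)) = (\<Sum>i\<in>A \<times> B. c i * (fst i * snd i))"
    by (simp add: sum.cartesian_product case_prod_beta')
  have e2: "(\<Sum>a\<in>A. \<Sum>b\<in>B. c (a,b) * (a * b)) = (\<Sum>a\<in>A. (\<Sum>b\<in>B. c (a,b) * b) * a)"
    by (rule sum.cong[OF refl]) (simp add: sum_distrib_left sum_distrib_right ac_simps)
  have "(\<Sum>i\<in>A \<times> B. c i * (fst i * snd i)) = (\<Sum>a\<in>A. (\<Sum>b\<in>B. c (a,b) * b) * a)"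
    using e1 e2 by simp
  then have s2: "(\<Sum>a\<in>A. (\<Sum>b\<in>B. c (a,b) * b) * a) = 0" using s by simp
  have g: "(\<Sum>b\<in>B. c (a,b) * b) = 0" if a: "a \<in> A" for a
    by (rule lin_indepD[OF A _ s2 a]) (use c BF KF in \<open>auto intro!: sf_sum[OF F] sf_mult[OF F]\<close>)
  obtain a b where ab: "p = (a,b)" "a \<in> A" "b \<in> B" using p by auto
  have "c (a,b) = 0" by (rule lin_indepD[OF B _ g[OF ab(2)] ab(3)]) (use c ab in auto)
  then show "c p = 0" using ab by simp
qed

lemma span_image:
  assumes "inj_on v I" "\<And>i. i \<in> I \<Longrightarrow> c i \<in> E"
  shows "(\<Sum>i\<in>I. c i * v i) \<in> span_over E (v ` I)"
proof (rule span_memI[of _ "\<lambda>x. c (inv_into I v x)"])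
  show "\<And>b. b \<in> v ` I \<Longrightarrow> c (inv_into I v b) \<in> E" using assms by (auto simp: inv_into_f_f)
  show "(\<Sum>i\<in>I. c i * v i) = (\<Sum>b\<in>v ` I. c (inv_into I v b) * b)"
    by (simp add: sum.reindex[OF assms(1)] inv_into_f_f[OF assms(1)])
qed

lemma tower:
  assumes K: "subfield K" and E: "subfield E" and X: "subfield X" and KE: "K \<subseteq> E" and EX: "E \<subseteq> X"
    and B: "is_basis_over E X B" and C: "is_basis_over K E C"
  shows "is_basis_over K X ((\<lambda>p. fst p * snd p) ` (B \<times> C))"
proof -
  define v where "v = (\<lambda>p::'a\<times>'a. fst p * snd p)"
  have fi: "findep K (B \<times> C) v" unfolding v_def
    by (rule prod_indep[OF K E KE basis_indep[OF B] basis_sub[OF C] basis_indep[OF C]])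
  have inj: "inj_on v (B \<times> C)" by (rule findep_inj[OF fi K])
  have ind: "lin_indep_over K (v ` (B \<times> C))" using fi findep_image[OF inj] by simp
  have fin: "finite (v ` (B \<times> C))" using basis_finite[OF B] basis_finite[OF C] by simp
  have ab: "\<And>a b. a \<in> B \<Longrightarrow> b \<in> C \<Longrightarrow> a * b \<in> X"
    using basis_sub[OF B] basis_sub[OF C] EX by (intro sf_mult[OF X]) auto
  have sub: "v ` (B \<times> C) \<subseteq> X" using ab by (auto simp: v_def)
  have sp1: "span_over K (v ` (B \<times> C)) \<subseteq> X"
  proof
    fix x assume "x \<in> span_over K (v ` (B \<times> C))"
    then obtain c where c: "\<And>b. b \<in> v ` (B \<times> C) \<Longrightarrow> c b \<in> K" "x = (\<Sum>b\<in>v ` (B \<times> C). c b * b)" unfolding span_over_def by blast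
    show "x \<in> X" unfolding c(2) using c(1) sub KE EX by (intro sf_sum[OF X] sf_mult[OF X]) auto
  qed
  have sp2: "X \<subseteq> span_over K (v ` (B \<times> C))"
  proof
    fix x assume "x \<in> X"
    then have "x \<in> span_over E B" using basis_span[OF B] by simp
    then obtain c where c: "\<And>b. b \<in> B \<Longrightarrow> c b \<in> E" "x = (\<Sum>b\<in>B. c b * b)" unfolding span_over_def by blast
    have "\<forall>b\<in>B. \<exists>d. (\<forall>e\<in>C. d e \<in> K) \<and> c b = (\<Sum>e\<in>C. d e * e)"
      using c(1) basis_span[OF C] unfolding span_over_def by blast
    then obtain d where d: "\<And>b. b \<in> B \<Longrightarrow> (\<forall>e\<in>C. d b e \<in> K) \<and> c b = (\<Sum>e\<in>C. d b e * e)"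
      using bchoice[of B] by metis
    have "x = (\<Sum>b\<in>B. \<Sum>e\<in>C. d b e * (b * e))"
      unfolding c(2)
    proof (rule sum.cong[OF refl])
      fix b assume b: "b \<in> B"
      have "c b * b = (\<Sum>e\<in>C. d b e * e) * b" using d[OF b] by simp
      also have "\<dots> = (\<Sum>e\<in>C. d b e * (b * e))" by (simp add: sum_distrib_left sum_distrib_right ac_simps)
      finally show "c b * b = (\<Sum>e\<in>C. d b e * (b * e))" .
    qed
    also have "\<dots> = (\<Sum>p\<in>B \<times> C. d (fst p) (snd p) * v p)"
      by (simp add: sum.cartesian_product v_def case_prod_beta')
    also have "\<dots> \<in> span_over K (v ` (B \<times> C))"
      by (rule span_image[OF inj]) (use d in auto)
    finally show "x \<in> span_over K (v ` (B \<times> C))" .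
  qed
  show ?thesis unfolding is_basis_over_def v_def[symmetric] using fin sub ind sp1 sp2 by auto
qed



section \<open>Automorphisms\<close>

lemma aut_bij: "\<sigma> \<in> Aut_over E L \<Longrightarrow> bij_betw \<sigma> L L" by (simp add: Aut_over_def)
lemma aut_add: "\<sigma> \<in> Aut_over E L \<Longrightarrow> x \<in> L \<Longrightarrow> y \<in> L \<Longrightarrow> \<sigma> (x + y) = \<sigma> x + \<sigma> y"
  by (simp add: Aut_over_def)
lemma aut_mult: "\<sigma> \<in> Aut_over E L \<Longrightarrow> x \<in> L \<Longrightarrow> y \<in> L \<Longrightarrow> \<sigma> (x * y) = \<sigma> x * \<sigma> y"
  by (simp add: Aut_over_def)
lemma aut_fix: "\<sigma> \<in> Aut_over E L \<Longrightarrow> x \<in> E \<Longrightarrow> \<sigma> x = x" by (simp add: Aut_over_def)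
lemma aut_in: "\<sigma> \<in> Aut_over E L \<Longrightarrow> x \<in> L \<Longrightarrow> \<sigma> x \<in> L"
  using aut_bij bij_betwE by blast
lemma aut_inj: "\<sigma> \<in> Aut_over E L \<Longrightarrow> inj_on \<sigma> L"
  using aut_bij bij_betw_imp_inj_on by blast

lemma aut_0: "\<sigma> \<in> Aut_over E L \<Longrightarrow> 0 \<in> L \<Longrightarrow> \<sigma> 0 = 0"
proof -
  assume a: "\<sigma> \<in> Aut_over E L" "0 \<in> L"
  have h: "\<sigma> 0 = \<sigma> 0 + \<sigma> 0" using aut_add[OF a(1) a(2) a(2)] by simp
  show "\<sigma> 0 = 0" using h by (metis add_cancel_right_right)
qed

lemma aut_uminus: "\<sigma> \<in> Aut_over E L \<Longrightarrow> subfield L \<Longrightarrow> x \<in> L \<Longrightarrow> \<sigma> (- x) = - \<sigma> x"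
  using aut_add[of \<sigma> E L x "-x"] aut_0[of \<sigma> E L] sf_uminus[of L x] sf_0[of L]
  by (simp add: eq_neg_iff_add_eq_0 add.commute)

lemma aut_sum: "\<sigma> \<in> Aut_over E L \<Longrightarrow> subfield L \<Longrightarrow> (\<And>i. i \<in> I \<Longrightarrow> f i \<in> L) \<Longrightarrow> \<sigma> (sum f I) = (\<Sum>i\<in>I. \<sigma> (f i))"
proof (induction I rule: infinite_finite_induct)
  case (infinite A) then show ?case using aut_0[OF infinite.prems(1) sf_0[OF infinite.prems(2)]] by simp
next
  case empty then show ?case using aut_0[OF empty.prems(1) sf_0[OF empty.prems(2)]] by simp
next
  case (insert x F)
  have "sum f F \<in> L" using insert.prems by (intro sf_sum[OF insert.prems(2)]) auto
  then show ?case using insert aut_add[OF insert.prems(1)] by simp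
qed

lemma aut_id: "id \<in> Aut_over E L" by (simp add: Aut_over_def)

lemma aut_comp:
  assumes s: "\<sigma> \<in> Aut_over E L" and t: "\<tau> \<in> Aut_over E L"
  shows "\<sigma> \<circ> \<tau> \<in> Aut_over E L"
proof -
  have b: "bij_betw (\<sigma> \<circ> \<tau>) L L" using bij_betw_trans[OF aut_bij[OF t] aut_bij[OF s]] .
  have h: "\<forall>x\<in>L. \<forall>y\<in>L. (\<sigma> \<circ> \<tau>) (x + y) = (\<sigma> \<circ> \<tau>) x + (\<sigma> \<circ> \<tau>) y \<and> (\<sigma> \<circ> \<tau>) (x * y) = (\<sigma> \<circ> \<tau>) x * (\<sigma> \<circ> \<tau>) y"
    using aut_add[OF s] aut_mult[OF s] aut_add[OF t] aut_mult[OF t] aut_in[OF t] by simp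
  have f: "\<forall>x\<in>E. (\<sigma> \<circ> \<tau>) x = x" using aut_fix[OF s] aut_fix[OF t] by simp
  show ?thesis unfolding Aut_over_def using b h f by (intro CollectI conjI)
qed

lemma aut_inv:
  assumes s: "\<sigma> \<in> Aut_over E L" and EL: "E \<subseteq> L" and L: "subfield L"
  shows "inv_into L \<sigma> \<in> Aut_over E L"
proof -
  have b: "bij_betw \<sigma> L L" by (rule aut_bij[OF s])
  have bi: "bij_betw (inv_into L \<sigma>) L L" by (rule bij_betw_inv_into[OF b])
  have inj: "inj_on \<sigma> L" by (rule aut_inj[OF s])
  have surj: "\<sigma> ` L = L" using b by (simp add: bij_betw_def)
  have ii: "inv_into L \<sigma> (\<sigma> x) = x" if "x \<in> L" for x using inj that by (rule inv_into_f_f)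
  have hom: "inv_into L \<sigma> (x + y) = inv_into L \<sigma> x + inv_into L \<sigma> y \<and>
    inv_into L \<sigma> (x * y) = inv_into L \<sigma> x * inv_into L \<sigma> y" if "x \<in> L" "y \<in> L" for x y
  proof -
    have "x \<in> \<sigma> ` L" "y \<in> \<sigma> ` L" using that surj by auto
    then obtain x' y' where x': "x' \<in> L" "x = \<sigma> x'" and y': "y' \<in> L" "y = \<sigma> y'"
      by (meson imageE)
    have "x + y = \<sigma> (x' + y')" "x * y = \<sigma> (x' * y')"
      using aut_add[OF s] aut_mult[OF s] x' y' by auto
    moreover have "x' + y' \<in> L" "x' * y' \<in> L" using x' y' sf_add[OF L] sf_mult[OF L] by auto
    ultimately show ?thesis using x' y' ii by simp
  qed
  have fx: "inv_into L \<sigma> x = x" if "x \<in> E" for x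
    using ii[of x] aut_fix[OF s that] that EL by auto
  have h: "\<forall>x\<in>L. \<forall>y\<in>L. inv_into L \<sigma> (x + y) = inv_into L \<sigma> x + inv_into L \<sigma> y \<and> inv_into L \<sigma> (x * y) = inv_into L \<sigma> x * inv_into L \<sigma> y"
    using hom by blast
  have f: "\<forall>x\<in>E. inv_into L \<sigma> x = x" using fx by blast
  show ?thesis unfolding Aut_over_def using bi h f by (intro CollectI conjI)
qed

section \<open>Polynomials and automorphisms\<close>

lemma poly_hom:
  assumes s: "\<sigma> \<in> Aut_over K R" and R: "subfield R" and KR: "K \<subseteq> R" and y: "y \<in> R" and K: "subfield K"
  shows "(\<forall>i. coeff p i \<in> K) \<Longrightarrow> \<sigma> (poly p y) = poly p (\<sigma> y)"
proof (induction p rule: pCons_induct)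
  case 0 then show ?case using aut_fix[OF s sf_0[OF K]] by simp
next
  case (pCons a p)
  have aK: "a \<in> K" using pCons.prems[rule_format, of 0] by simp
  have pK: "\<forall>i. coeff p i \<in> K" using pCons.prems[rule_format, of "Suc _"] by simp
  have pR: "poly p y \<in> R"
    by (rule poly_in_ring[OF sf_0[OF R] sf_add[OF R] sf_mult[OF R] KR y pK])
  have "\<sigma> (poly (pCons a p) y) = \<sigma> a + \<sigma> y * \<sigma> (poly p y)"
    using aut_add[OF s] aut_mult[OF s] aK KR y pR sf_mult[OF R] by auto
  then show ?case using pCons.IH[OF pK] aut_fix[OF s aK] by simp
qed

lemma coeff_lin_in: "subfield R \<Longrightarrow> z \<in> R \<Longrightarrow> coeff [:- z, 1:] i \<in> R"
  by (cases i) (auto simp: sf_0 sf_1 sf_uminus coeff_pCons split: nat.split)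

lemma coeff_lin_hom:
  assumes "\<tau> \<in> Aut_over K R" "subfield R" "subfield K" "K \<subseteq> R" "z \<in> R"
  shows "\<tau> (coeff [:- z, 1:] i) = coeff [:- \<tau> z, 1:] i"
proof (cases i)
  case 0 then show ?thesis using aut_uminus[OF assms(1,2,5)] by simp
next
  case (Suc j)
  then show ?thesis using aut_fix[OF assms(1) sf_0[OF assms(3)]] aut_fix[OF assms(1) sf_1[OF assms(3)]]
    by (cases j) auto
qed

lemma prod_lin_coeff:
  assumes t: "\<tau> \<in> Aut_over K R" and R: "subfield R" and K: "subfield K" and KR: "K \<subseteq> R"
  shows "finite Orb \<Longrightarrow> Orb \<subseteq> R \<Longrightarrow> (\<forall>n. coeff (\<Prod>z\<in>Orb. [:- z, 1:]) n \<in> R) \<and>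
     (\<forall>n. \<tau> (coeff (\<Prod>z\<in>Orb. [:- z, 1:]) n) = coeff (\<Prod>z\<in>Orb. [:- \<tau> z, 1:]) n)"
proof (induction Orb rule: finite_induct)
  case empty
  have "\<tau> (coeff 1 n) = coeff 1 n" for n :: nat
    using aut_fix[OF t sf_0[OF K]] aut_fix[OF t sf_1[OF K]] by (cases n) auto
  moreover have "coeff (1::'a poly) n \<in> R" for n using sf_0[OF R] sf_1[OF R] by (cases n) auto
  ultimately show ?case by simp
next
  case (insert z Orb)
  define P where "P = (\<Prod>z\<in>Orb. [:- z, 1:])"
  define P' where "P' = (\<Prod>z\<in>Orb. [:- \<tau> z, 1:])"
  have zR: "z \<in> R" using insert.prems by simp
  have IH1: "\<And>n. coeff P n \<in> R" and IH2: "\<And>n. \<tau> (coeff P n) = coeff P' n"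
    using insert.IH insert.prems by (auto simp: P_def P'_def)
  have e1: "(\<Prod>x\<in>insert z Orb. [:- x, 1:]) = [:- z, 1:] * P" using insert.hyps by (simp add: P_def)
  have e2: "(\<Prod>x\<in>insert z Orb. [:- \<tau> x, 1:]) = [:- \<tau> z, 1:] * P'" using insert.hyps by (simp add: P'_def)
  have mem: "coeff ([:- z, 1:] * P) n \<in> R" for n
    unfolding coeff_mult by (rule sf_sum[OF R]) (use coeff_lin_in[OF R zR] IH1 in \<open>auto intro!: sf_mult[OF R]\<close>)
  have hom: "\<tau> (coeff ([:- z, 1:] * P) n) = coeff ([:- \<tau> z, 1:] * P') n" for n
  proof -
    have "\<tau> (coeff ([:- z, 1:] * P) n) = (\<Sum>i\<le>n. \<tau> (coeff [:- z, 1:] i * coeff P (n - i)))"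
      unfolding coeff_mult by (rule aut_sum[OF t R]) (use coeff_lin_in[OF R zR] IH1 in \<open>auto intro!: sf_mult[OF R]\<close>)
    also have "\<dots> = (\<Sum>i\<le>n. coeff [:- \<tau> z, 1:] i * coeff P' (n - i))"
      by (rule sum.cong[OF refl]) (simp add: aut_mult[OF t coeff_lin_in[OF R zR] IH1] coeff_lin_hom[OF t R K KR zR] IH2)
    also have "\<dots> = coeff ([:- \<tau> z, 1:] * P') n" by (simp only: coeff_mult)
    finally show ?thesis .
  qed
  show ?case unfolding e1 e2 using mem hom by simp
qed

lemma normal_image:
  assumes K: "subfield K" and Ni: "galois_ext K Ni" and s: "\<sigma> \<in> Aut_over K N" and N: "subfield N"
    and KN: "K \<subseteq> N" and yN: "y \<in> N" and yNi: "y \<in> Ni" and alg: "algebraic_over K y"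
  shows "\<sigma> y \<in> Ni"
proof -
  have NiF: "subfield Ni" and KNi: "K \<subseteq> Ni" using Ni by (auto simp: galois_ext_def finite_ext_def)
  have fixf: "{x\<in>Ni. \<forall>\<tau>\<in>Aut_over K Ni. \<tau> x = x} = K" using Ni by (simp add: galois_ext_def)
  define G where "G = Aut_over K Ni"
  define Orb where "Orb = (\<lambda>\<tau>. \<tau> y) ` G"
  obtain p where p: "p \<noteq> 0" "\<forall>i. coeff p i \<in> K" "poly p y = 0" using alg unfolding algebraic_over_def by blast
  have OrbR: "Orb \<subseteq> {x. poly p x = 0}"
  proof
    fix x assume "x \<in> Orb"
    then obtain \<tau> where t: "\<tau> \<in> G" "x = \<tau> y" by (auto simp: Orb_def)
    have "\<tau> (poly p y) = poly p (\<tau> y)" using poly_hom[OF t(1)[unfolded G_def] NiF KNi yNi K p(2)] .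
    then show "x \<in> {x. poly p x = 0}" using p(3) aut_0[OF t(1)[unfolded G_def] sf_0[OF NiF]] t(2) by simp
  qed
  have finOrb: "finite Orb" using finite_subset[OF OrbR poly_roots_finite[OF p(1)]] .
  have OrbNi: "Orb \<subseteq> Ni" using aut_in[of _ K Ni y] yNi by (auto simp: Orb_def G_def)
  have yOrb: "y \<in> Orb" unfolding Orb_def G_def using aut_id[of K Ni] by (metis id_apply image_eqI)
  define q where "q = (\<Prod>z\<in>Orb. [:- z, 1:])"
  have qK: "coeff q n \<in> K" for n
  proof -
    have inNi: "coeff q n \<in> Ni" using prod_lin_coeff[OF aut_id NiF K KNi finOrb OrbNi] by (simp add: q_def)
    have "\<tau> (coeff q n) = coeff q n" if t: "\<tau> \<in> G" for \<tau>
    proof -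
      have t': "\<tau> \<in> Aut_over K Ni" using t by (simp add: G_def)
      have inj: "inj_on \<tau> Orb" using aut_inj[OF t'] OrbNi inj_on_subset by blast
      have sub: "\<tau> ` Orb \<subseteq> Orb"
      proof
        fix x assume "x \<in> \<tau> ` Orb"
        then obtain \<rho> where r: "\<rho> \<in> G" "x = \<tau> (\<rho> y)" by (auto simp: Orb_def)
        have "\<tau> \<circ> \<rho> \<in> G" using aut_comp[OF t' r(1)[unfolded G_def]] by (simp add: G_def)
        then show "x \<in> Orb" unfolding Orb_def using r(2) by (metis comp_apply image_eqI)
      qed
      have im: "\<tau> ` Orb = Orb" by (rule endo_inj_surj[OF finOrb sub inj])
      have "\<tau> (coeff q n) = coeff (\<Prod>z\<in>Orb. [:- \<tau> z, 1:]) n"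
        using prod_lin_coeff[OF t' NiF K KNi finOrb OrbNi] by (simp add: q_def)
      also have "(\<Prod>z\<in>Orb. [:- \<tau> z, 1:]) = (\<Prod>z\<in>\<tau> ` Orb. [:- z, 1:])"
        by (simp add: prod.reindex[OF inj] comp_def)
      also have "\<dots> = q" by (simp add: im q_def)
      finally show ?thesis .
    qed
    then have "coeff q n \<in> {x\<in>Ni. \<forall>\<tau>\<in>Aut_over K Ni. \<tau> x = x}" using inNi by (simp add: G_def)
    then show ?thesis using fixf by simp
  qed
  have polyq: "poly q w = (\<Prod>z\<in>Orb. w - z)" for w by (simp add: q_def poly_prod)
  have "poly q y = 0" using polyq[of y] yOrb finOrb by (simp add: prod_zero_iff)
  moreover have "\<sigma> (poly q y) = poly q (\<sigma> y)" using poly_hom[OF s N KN yN K] qK by blast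
  ultimately have "poly q (\<sigma> y) = 0" using aut_0[OF s sf_0[OF N]] by simp
  then have "\<sigma> y \<in> Orb" using polyq[of "\<sigma> y"] finOrb by (simp add: prod_zero_iff)
  then show ?thesis using OrbNi by auto
qed

lemma gc_galois:
  assumes K: "subfield K" and alg: "\<forall>x. algebraic_over K x" and N0: "galois_ext K N0" and LN0: "L \<subseteq> N0"
  shows "galois_ext K (galois_closure K L)"
proof -
  define Lt where "Lt = galois_closure K L"
  have LtN0: "Lt \<subseteq> N0" using gc_least[OF N0 LN0] by (simp add: Lt_def)
  have sfLt: "subfield Lt" using gc_subfield by (simp add: Lt_def)
  have KLt: "K \<subseteq> Lt" unfolding Lt_def galois_closure_def galois_ext_def finite_ext_def by blast
  have N0f: "finite_ext K N0" and fix0: "{x\<in>N0. \<forall>\<sigma>\<in>Aut_over K N0. \<sigma> x = x} = K"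
    using N0 by (auto simp: galois_ext_def)
  obtain B0 where B0: "is_basis_over K N0 B0" using N0f by (auto simp: finite_ext_def)
  have sfN0: "subfield N0" and KN0: "K \<subseteq> N0" using N0f by (auto simp: finite_ext_def)
  obtain S where S: "is_basis_over K Lt S"
    using subspace_basis[OF K B0 LtN0 sf_0[OF sfLt] sf_add[OF sfLt]] KLt sf_mult[OF sfLt] by blast
  have fe: "finite_ext K Lt" using sfLt K KLt S by (auto simp: finite_ext_def)
  have maps: "\<sigma> ` Lt \<subseteq> Lt" if s: "\<sigma> \<in> Aut_over K N0" for \<sigma>
  proof
    fix x assume "x \<in> \<sigma> ` Lt"
    then obtain y where y: "y \<in> Lt" "x = \<sigma> y" by auto
    have "\<sigma> y \<in> Ni" if Ni: "galois_ext K Ni" "L \<subseteq> Ni" for Ni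
    proof -
      have "y \<in> Ni" using y(1) Ni unfolding Lt_def galois_closure_def by blast
      then show ?thesis using normal_image[OF K Ni(1) s sfN0 KN0 _ _ alg[rule_format]] y(1) LtN0 by blast
    qed
    then show "x \<in> Lt" using y(2) unfolding Lt_def galois_closure_def by blast
  qed
  have "{x\<in>Lt. \<forall>\<sigma>\<in>Aut_over K Lt. \<sigma> x = x} \<subseteq> K"
  proof
    fix x assume x: "x \<in> {x\<in>Lt. \<forall>\<sigma>\<in>Aut_over K Lt. \<sigma> x = x}"
    show "x \<in> K"
    proof (rule ccontr)
      assume nK: "x \<notin> K"
      have xN0: "x \<in> N0" using x LtN0 by auto
      then obtain \<sigma> where s: "\<sigma> \<in> Aut_over K N0" "\<sigma> x \<noteq> x" using fix0 nK by blast
      have si: "inv_into N0 \<sigma> \<in> Aut_over K N0" by (rule aut_inv[OF s(1) KN0 sfN0])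
      have inj: "inj_on \<sigma> N0" by (rule aut_inj[OF s(1)])
      have surj: "\<sigma> ` N0 = N0" using aut_bij[OF s(1)] by (simp add: bij_betw_def)
      have "bij_betw \<sigma> Lt Lt"
      proof (rule bij_betw_byWitness[where f'="inv_into N0 \<sigma>"])
        show "\<forall>a\<in>Lt. inv_into N0 \<sigma> (\<sigma> a) = a" using inj LtN0 by (auto intro: inv_into_f_f)
        show "\<forall>a\<in>Lt. \<sigma> (inv_into N0 \<sigma> a) = a"
        proof
          fix a assume "a \<in> Lt"
          then have "a \<in> \<sigma> ` N0" using surj LtN0 by auto
          then show "\<sigma> (inv_into N0 \<sigma> a) = a" by (rule f_inv_into_f)
        qed
        show "\<sigma> ` Lt \<subseteq> Lt" by (rule maps[OF s(1)])
        show "inv_into N0 \<sigma> ` Lt \<subseteq> Lt" by (rule maps[OF si])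
      qed
      then have "\<sigma> \<in> Aut_over K Lt"
        using s(1) LtN0 unfolding Aut_over_def by (auto simp: subset_iff)
      then show False using x s(2) by auto
    qed
  qed
  moreover have "K \<subseteq> {x\<in>Lt. \<forall>\<sigma>\<in>Aut_over K Lt. \<sigma> x = x}" using KLt aut_fix by blast
  ultimately show ?thesis using fe by (simp add: galois_ext_def Lt_def)
qed



lemma sym_disj:
  assumes K: "subfield K" and K': "subfield K'" and F: "subfield F" and KK': "K \<subseteq> K'"
    and B: "is_basis_over K F B" and BK': "lin_indep_over K' B" and C: "is_basis_over K K' C"
  shows "lin_indep_over F C"
  unfolding lin_indep_over_def
proof (intro conjI allI impI ballI)
  show fC: "finite C" by (rule basis_finite[OF C])
  have fB: "finite B" by (rule basis_finite[OF B])
  fix g e assume g: "\<forall>b\<in>C. g b \<in> F" and s: "(\<Sum>b\<in>C. g b * b) = 0" and e: "e \<in> C"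
  have "\<forall>e\<in>C. \<exists>h. (\<forall>b\<in>B. h b \<in> K) \<and> g e = (\<Sum>b\<in>B. h b * b)"
    using g basis_span[OF B] unfolding span_over_def by blast
  then obtain h where h: "\<And>e. e \<in> C \<Longrightarrow> (\<forall>b\<in>B. h e b \<in> K) \<and> g e = (\<Sum>b\<in>B. h e b * b)"
    using bchoice[of C] by metis
  have "(\<Sum>e\<in>C. g e * e) = (\<Sum>e\<in>C. \<Sum>b\<in>B. (h e b * e) * b)"
  proof (rule sum.cong[OF refl])
    fix e assume "e \<in> C"
    then have "g e * e = (\<Sum>b\<in>B. h e b * b) * e" using h by simp
    also have "\<dots> = (\<Sum>b\<in>B. (h e b * e) * b)" by (simp add: sum_distrib_right sum_distrib_left ac_simps)
    finally show "g e * e = (\<Sum>b\<in>B. (h e b * e) * b)" .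
  qed
  also have "\<dots> = (\<Sum>b\<in>B. (\<Sum>e\<in>C. h e b * e) * b)"
    by (subst sum.swap) (simp add: sum_distrib_right)
  finally have s2: "(\<Sum>b\<in>B. (\<Sum>e\<in>C. h e b * e) * b) = 0" using s by simp
  have inner: "(\<Sum>e\<in>C. h e b * e) = 0" if b: "b \<in> B" for b
  proof (rule lin_indepD[OF BK' _ s2 b])
    fix b' assume "b' \<in> B"
    then show "(\<Sum>e\<in>C. h e b' * e) \<in> K'"
      using h basis_sub[OF C] KK' by (intro sf_sum[OF K'] sf_mult[OF K']) auto
  qed
  have "h e b = 0" if b: "b \<in> B" for b
    by (rule lin_indepD[OF basis_indep[OF C] _ inner[OF b] e]) (use h b in auto)
  then show "g e = 0" using h[OF e] by simp
qed

lemma base_change_galois: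
  assumes K: "subfield K" and K': "subfield K'" and KK': "K \<subseteq> K'" and FG: "galois_ext K F"
    and B: "is_basis_over K F B" and BK': "lin_indep_over K' B" and C: "is_basis_over K K' C"
    and alg: "\<forall>x. algebraic_over K x"
  shows "galois_ext K' (compositum F K')"
proof -
  have Ffe: "finite_ext K F" and Ffix: "{x\<in>F. \<forall>\<sigma>\<in>Aut_over K F. \<sigma> x = x} = K"
    using FG by (auto simp: galois_ext_def)
  have F: "subfield F" and KF: "K \<subseteq> F" using Ffe by (auto simp: finite_ext_def)
  define X where "X = span_over K' B"
  have be: "is_basis_over K' (compositum F K') B" "finite_ext K' (compositum F K')"
    "compositum F K' = span_over K' B"
    using basis_ext[OF K K' KK' B F alg BK'] by auto
  have comp: "compositum F K' = X" using be(3) by (simp add: X_def)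
  have sf: "subfield (span_over K' B) \<and> F \<subseteq> span_over K' B \<and> K' \<subseteq> span_over K' B"
    using span_field[OF K K' KK' B F alg] by auto
  have FX: "F \<subseteq> X" and K'X: "K' \<subseteq> X" and sfX: "subfield X" using sf by (auto simp: X_def)
  have fB: "finite B" and BF: "B \<subseteq> F" using B by (auto simp: is_basis_over_def)
  have spF: "span_over K B = F" by (rule basis_span[OF B])
  define crd where "crd x = (SOME c. (\<forall>b\<in>B. c b \<in> K') \<and> x = (\<Sum>b\<in>B. c b * b))" for x
  have crd: "(\<forall>b\<in>B. crd x b \<in> K') \<and> x = (\<Sum>b\<in>B. crd x b * b)" if "x \<in> X" for x
  proof -
    have "\<exists>c. (\<forall>b\<in>B. c b \<in> K') \<and> x = (\<Sum>b\<in>B. c b * b)" using that unfolding X_def span_over_def by blast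
    then show ?thesis unfolding crd_def by (rule someI_ex)
  qed
  have crd_u: "crd (\<Sum>b\<in>B. c b * b) b = c b" if c: "\<forall>b\<in>B. c b \<in> K'" and b: "b \<in> B" for c b
  proof -
    define x where "x = (\<Sum>b\<in>B. c b * b)"
    have xX: "x \<in> X" unfolding X_def x_def by (rule span_memI[OF _ refl]) (use c in auto)
    have s0: "(\<Sum>b\<in>B. (crd x b - c b) * b) = 0"
      using crd[OF xX] by (simp add: left_diff_distrib sum_subtractf x_def[symmetric])
    have "crd x b - c b = 0"
      by (rule lin_indepD[OF BK' _ s0 b]) (use crd[OF xX] c sf_diff[OF K'] in auto)
    then show ?thesis by (simp add: x_def)
  qed
  define ext where "ext \<sigma> x = (\<Sum>b\<in>B. crd x b * \<sigma> b)" for \<sigma> :: "'a \<Rightarrow> 'a" and x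
  have ext_lin: "ext \<sigma> (\<Sum>b\<in>B. c b * b) = (\<Sum>b\<in>B. c b * \<sigma> b)" if c: "\<forall>b\<in>B. c b \<in> K'" for c \<sigma>
    unfolding ext_def by (rule sum.cong[OF refl]) (simp add: crd_u[OF c])
  have ext_add: "ext \<sigma> (x + y) = ext \<sigma> x + ext \<sigma> y" if "x \<in> X" "y \<in> X" for \<sigma> x y
  proof -
    have "x + y = (\<Sum>b\<in>B. (crd x b + crd y b) * b)"
      using crd[OF that(1)] crd[OF that(2)] by (simp add: distrib_right sum.distrib)
    then have "ext \<sigma> (x + y) = (\<Sum>b\<in>B. (crd x b + crd y b) * \<sigma> b)"
      using ext_lin[of "\<lambda>b. crd x b + crd y b" \<sigma>] crd[OF that(1)] crd[OF that(2)] sf_add[OF K'] by simp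
    then show ?thesis by (simp add: ext_def distrib_right sum.distrib)
  qed
  have ext_sm: "ext \<sigma> (e * x) = e * ext \<sigma> x" if e: "e \<in> K'" and x: "x \<in> X" for \<sigma> e x
  proof -
    obtain c where c: "c = crd x" by simp
    have xe: "x = (\<Sum>b\<in>B. c b * b)" using crd[OF x] c by simp
    have "e * x = (\<Sum>b\<in>B. (e * c b) * b)"
      by (subst xe) (simp add: sum_distrib_left mult.assoc)
    then have "e * x = (\<Sum>b\<in>B. (e * crd x b) * b)" using c by simp
    then have "ext \<sigma> (e * x) = (\<Sum>b\<in>B. (e * crd x b) * \<sigma> b)"
      using ext_lin[of "\<lambda>b. e * crd x b" \<sigma>] crd[OF x] sf_mult[OF K' e] by simp
    then show ?thesis by (simp add: ext_def sum_distrib_left mult.assoc)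
  qed
  have ext_0: "ext \<sigma> 0 = 0" for \<sigma>
    using ext_lin[of "\<lambda>_. 0" \<sigma>] sf_0[OF K'] by simp
  have ext_sum: "ext \<sigma> (sum f I) = (\<Sum>i\<in>I. ext \<sigma> (f i))" if "\<And>i. i \<in> I \<Longrightarrow> f i \<in> X" for \<sigma> f and I :: "'b set"
    using that
  proof (induction I rule: infinite_finite_induct)
    case (infinite A) then show ?case by (simp add: ext_0)
  next
    case empty then show ?case by (simp add: ext_0)
  next
    case (insert i I)
    have "sum f I \<in> X" using insert.prems unfolding X_def by (intro span_sum[OF K']) (auto simp: X_def)
    then show ?case using insert ext_add by simp
  qed
  have ext_F: "ext \<sigma> f = \<sigma> f" if s: "\<sigma> \<in> Aut_over K F" and f: "f \<in> F" for \<sigma> f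
  proof -
    obtain c where c: "\<And>b. b \<in> B \<Longrightarrow> c b \<in> K" "f = (\<Sum>b\<in>B. c b * b)"
      using f spF unfolding span_over_def by blast
    have cbF: "c b * b \<in> F" if b: "b \<in> B" for b
    proof -
      have "c b \<in> F" "b \<in> F" using c(1)[OF b] b BF KF by auto
      then show ?thesis by (rule sf_mult[OF F])
    qed
    have "ext \<sigma> f = (\<Sum>b\<in>B. c b * \<sigma> b)" unfolding c(2) by (rule ext_lin) (use c KK' in auto)
    also have "\<dots> = (\<Sum>b\<in>B. \<sigma> (c b * b))"
    proof (rule sum.cong[OF refl])
      fix b assume b: "b \<in> B"
      then have "c b \<in> F" "b \<in> F" using c BF KF by auto
      then show "c b * \<sigma> b = \<sigma> (c b * b)" using aut_mult[OF s] aut_fix[OF s c(1)[OF b]] by simp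
    qed
    also have "\<dots> = \<sigma> f" unfolding c(2)
      by (rule aut_sum[OF s F, symmetric]) (use cbF in auto)
    finally show ?thesis .
  qed
  have ext_in: "ext \<sigma> x \<in> X" if s: "\<sigma> \<in> Aut_over K F" and x: "x \<in> X" for \<sigma> x
    unfolding ext_def X_def
    by (rule span_sum[OF K'], rule span_smult[OF K']) (use crd[OF x] aut_in[OF s] BF FX in \<open>auto simp: X_def\<close>)
  have ext_mult: "ext \<sigma> (x * y) = ext \<sigma> x * ext \<sigma> y" if s: "\<sigma> \<in> Aut_over K F" and x: "x \<in> X" and y: "y \<in> X" for \<sigma> x y
  proof -
    define c where "c = crd x"
    define d where "d = crd y"
    have cK: "\<And>b. b \<in> B \<Longrightarrow> c b \<in> K'" and xe: "x = (\<Sum>b\<in>B. c b * b)" using crd[OF x] by (auto simp: c_def)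
    have dK: "\<And>b. b \<in> B \<Longrightarrow> d b \<in> K'" and ye: "y = (\<Sum>b\<in>B. d b * b)" using crd[OF y] by (auto simp: d_def)
    have bb: "b * b' \<in> F" if "b \<in> B" "b' \<in> B" for b b' using that BF sf_mult[OF F] by auto
    have trm: "(c b * d b') * (b * b') \<in> X" if "b \<in> B" "b' \<in> B" for b b'
      using span_smult[OF K' sf_mult[OF K' cK dK] , of b b' "b * b'" B] bb[OF that] FX that by (auto simp: X_def)
    have "x * y = (\<Sum>b\<in>B. \<Sum>b'\<in>B. (c b * b) * (d b' * b'))" unfolding xe ye by (rule sum_product)
    also have "\<dots> = (\<Sum>b\<in>B. \<Sum>b'\<in>B. (c b * d b') * (b * b'))" by (simp add: ac_simps)
    finally have xy: "x * y = (\<Sum>b\<in>B. \<Sum>b'\<in>B. (c b * d b') * (b * b'))" .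
    have "ext \<sigma> (x * y) = (\<Sum>b\<in>B. ext \<sigma> (\<Sum>b'\<in>B. (c b * d b') * (b * b')))"
      unfolding xy by (rule ext_sum) (use trm in \<open>auto intro!: span_sum[OF K'] simp: X_def\<close>)
    also have "\<dots> = (\<Sum>b\<in>B. \<Sum>b'\<in>B. ext \<sigma> ((c b * d b') * (b * b')))"
      by (rule sum.cong[OF refl], rule ext_sum) (use trm in auto)
    also have "\<dots> = (\<Sum>b\<in>B. \<Sum>b'\<in>B. (c b * d b') * (\<sigma> b * \<sigma> b'))"
    proof (rule sum.cong[OF refl], rule sum.cong[OF refl])
      fix b b' assume bB: "b \<in> B" and b'B: "b' \<in> B"
      have "ext \<sigma> ((c b * d b') * (b * b')) = (c b * d b') * ext \<sigma> (b * b')"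
        using ext_sm sf_mult[OF K' cK[OF bB] dK[OF b'B]] bb[OF bB b'B] FX by auto
      also have "ext \<sigma> (b * b') = \<sigma> b * \<sigma> b'"
        using ext_F[OF s bb[OF bB b'B]] aut_mult[OF s] bB b'B BF by auto
      finally show "ext \<sigma> ((c b * d b') * (b * b')) = (c b * d b') * (\<sigma> b * \<sigma> b')" .
    qed
    also have "\<dots> = (\<Sum>b\<in>B. \<Sum>b'\<in>B. (c b * \<sigma> b) * (d b' * \<sigma> b'))" by (simp add: ac_simps)
    also have "\<dots> = (\<Sum>b\<in>B. c b * \<sigma> b) * (\<Sum>b\<in>B. d b * \<sigma> b)" by (rule sum_product[symmetric])
    also have "\<dots> = ext \<sigma> x * ext \<sigma> y" by (simp add: ext_def c_def d_def)
    finally show ?thesis .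
  qed
  have ext_inv: "ext \<tau> (ext \<sigma> x) = x" if s: "\<sigma> \<in> Aut_over K F" and t: "\<tau> \<in> Aut_over K F"
    and ts: "\<And>f. f \<in> F \<Longrightarrow> \<tau> (\<sigma> f) = f" and x: "x \<in> X" for \<sigma> \<tau> x
  proof -
    have sb: "\<sigma> b \<in> F" if "b \<in> B" for b using aut_in[OF s] that BF by auto
    have "ext \<tau> (ext \<sigma> x) = (\<Sum>b\<in>B. ext \<tau> (crd x b * \<sigma> b))"
      unfolding ext_def[of \<sigma>] by (rule ext_sum) (use crd[OF x] sb FX in \<open>auto intro!: span_smult[OF K'] simp: X_def\<close>)
    also have "\<dots> = (\<Sum>b\<in>B. crd x b * b)"
    proof (rule sum.cong[OF refl])
      fix b assume b: "b \<in> B"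
      have "crd x b \<in> K'" "\<sigma> b \<in> X" using crd[OF x] b sb FX by auto
      then have "ext \<tau> (crd x b * \<sigma> b) = crd x b * ext \<tau> (\<sigma> b)" by (rule ext_sm)
      also have "ext \<tau> (\<sigma> b) = b" using ext_F[OF t sb[OF b]] ts b BF by auto
      finally show "ext \<tau> (crd x b * \<sigma> b) = crd x b * b" .
    qed
    also have "\<dots> = x" using crd[OF x] by simp
    finally show ?thesis .
  qed
  have ext_fix: "ext \<sigma> e = e" if s: "\<sigma> \<in> Aut_over K F" and e: "e \<in> K'" for \<sigma> e
  proof -
    have "1 \<in> X" using sf_1[OF F] FX by auto
    then have "ext \<sigma> (e * 1) = e * ext \<sigma> 1" by (rule ext_sm[OF e])
    also have "ext \<sigma> 1 = 1" using ext_F[OF s sf_1[OF F]] aut_fix[OF s sf_1[OF K]] by simp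
    finally show ?thesis by simp
  qed
  have ext_aut: "ext \<sigma> \<in> Aut_over K' X" if s: "\<sigma> \<in> Aut_over K F" for \<sigma>
  proof -
    define \<tau> where "\<tau> = inv_into F \<sigma>"
    have t: "\<tau> \<in> Aut_over K F" unfolding \<tau>_def by (rule aut_inv[OF s KF F])
    have inj: "inj_on \<sigma> F" by (rule aut_inj[OF s])
    have surj: "\<sigma> ` F = F" using aut_bij[OF s] by (simp add: bij_betw_def)
    have ts: "\<tau> (\<sigma> f) = f" if "f \<in> F" for f unfolding \<tau>_def using inj that by (rule inv_into_f_f)
    have st: "\<sigma> (\<tau> f) = f" if "f \<in> F" for f unfolding \<tau>_def using that surj by (intro f_inv_into_f) auto
    have bij: "bij_betw (ext \<sigma>) X X"
    proof (rule bij_betw_byWitness[where f'="ext \<tau>"])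
      show "\<forall>a\<in>X. ext \<tau> (ext \<sigma> a) = a" using ext_inv[OF s t ts] by blast
      show "\<forall>a\<in>X. ext \<sigma> (ext \<tau> a) = a" using ext_inv[OF t s st] by blast
      show "ext \<sigma> ` X \<subseteq> X" using ext_in[OF s] by blast
      show "ext \<tau> ` X \<subseteq> X" using ext_in[OF t] by blast
    qed
    have h: "\<forall>x\<in>X. \<forall>y\<in>X. ext \<sigma> (x + y) = ext \<sigma> x + ext \<sigma> y \<and> ext \<sigma> (x * y) = ext \<sigma> x * ext \<sigma> y"
      using ext_add ext_mult[OF s] by blast
    have f: "\<forall>x\<in>K'. ext \<sigma> x = x" using ext_fix[OF s] by blast
    show ?thesis unfolding Aut_over_def using bij h f by (intro CollectI conjI)
  qed
  have CF: "lin_indep_over F C" by (rule sym_disj[OF K K' F KK' B BK' C])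
  have fC: "finite C" and CK': "C \<subseteq> K'" using C by (auto simp: is_basis_over_def)
  have fixX: "x \<in> K'" if x: "x \<in> X" and xf: "\<forall>\<phi>\<in>Aut_over K' X. \<phi> x = x" for x
  proof -
    define c where "c = crd x"
    have cK: "\<And>b. b \<in> B \<Longrightarrow> c b \<in> K'" and xe: "x = (\<Sum>b\<in>B. c b * b)" using crd[OF x] by (auto simp: c_def)
    have "\<forall>b\<in>B. \<exists>d. (\<forall>e\<in>C. d e \<in> K) \<and> c b = (\<Sum>e\<in>C. d e * e)"
      using cK basis_span[OF C] unfolding span_over_def by blast
    then obtain d where d: "\<And>b. b \<in> B \<Longrightarrow> (\<forall>e\<in>C. d b e \<in> K) \<and> c b = (\<Sum>e\<in>C. d b e * e)"
      using bchoice[of B] by metis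
    define f where "f e = (\<Sum>b\<in>B. d b e * b)" for e
    have fF: "f e \<in> F" if "e \<in> C" for e
      unfolding f_def spF[symmetric] by (rule span_memI[OF _ refl]) (use d that in auto)
    have "x = (\<Sum>b\<in>B. \<Sum>e\<in>C. e * (d b e * b))"
      unfolding xe
    proof (rule sum.cong[OF refl])
      fix b assume "b \<in> B"
      then have "c b * b = (\<Sum>e\<in>C. d b e * e) * b" using d by simp
      also have "\<dots> = (\<Sum>e\<in>C. e * (d b e * b))" by (simp add: sum_distrib_right sum_distrib_left ac_simps)
      finally show "c b * b = (\<Sum>e\<in>C. e * (d b e * b))" .
    qed
    also have "\<dots> = (\<Sum>e\<in>C. e * f e)"
      by (subst sum.swap) (simp add: f_def sum_distrib_left)
    finally have xf2: "x = (\<Sum>e\<in>C. e * f e)" .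
    have fK: "f e \<in> K" if e: "e \<in> C" for e
    proof -
      have "\<sigma> (f e) = f e" if s: "\<sigma> \<in> Aut_over K F" for \<sigma>
      proof -
        have efX: "e * f e \<in> X" if "e \<in> C" for e
        proof -
          have "e \<in> X" "f e \<in> X" using that CK' K'X fF FX by auto
          then show ?thesis by (rule sf_mult[OF sfX])
        qed
        have efs: "ext \<sigma> (e * f e) = e * \<sigma> (f e)" if "e \<in> C" for e
        proof -
          have "e \<in> K'" "f e \<in> X" using that CK' fF FX by auto
          then have "ext \<sigma> (e * f e) = e * ext \<sigma> (f e)" by (rule ext_sm)
          then show ?thesis using ext_F[OF s fF[OF that]] by simp
        qed
        have "ext \<sigma> x = (\<Sum>e\<in>C. ext \<sigma> (e * f e))"
          unfolding xf2 by (rule ext_sum) (use efX in auto)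
        also have "\<dots> = (\<Sum>e\<in>C. e * \<sigma> (f e))"
          by (rule sum.cong[OF refl]) (use efs in auto)
        finally have h1: "ext \<sigma> x = (\<Sum>e\<in>C. e * \<sigma> (f e))" .
        have h2: "ext \<sigma> x = x" using xf ext_aut[OF s] by blast
        have "(\<Sum>e\<in>C. e * \<sigma> (f e)) = x" using h1 h2 by simp
        then have "(\<Sum>e\<in>C. e * \<sigma> (f e)) - (\<Sum>e\<in>C. e * f e) = 0" using xf2 by simp
        then have s0: "(\<Sum>e\<in>C. (\<sigma> (f e) - f e) * e) = 0"
          by (simp add: sum_subtractf[symmetric] algebra_simps)
        have "\<sigma> (f e) - f e = 0"
          by (rule lin_indepD[OF CF _ s0 e]) (use fF aut_in[OF s] sf_diff[OF F] in auto)
        then show ?thesis by simp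
      qed
      then have "f e \<in> {x\<in>F. \<forall>\<sigma>\<in>Aut_over K F. \<sigma> x = x}" using fF[OF e] by blast
      then show ?thesis using Ffix by simp
    qed
    show "x \<in> K'" unfolding xf2 using fK CK' KK' by (intro sf_sum[OF K'] sf_mult[OF K']) auto
  qed
  have "{x\<in>X. \<forall>\<phi>\<in>Aut_over K' X. \<phi> x = x} = K'"
    using fixX K'X aut_fix by blast
  then show ?thesis using be(2) comp by (simp add: galois_ext_def)
qed



lemma disj_base:
  assumes E: "subfield E" and fA: "finite A" and fB: "finite B"
    and P: "findep E (A \<times> B) (\<lambda>p. fst p * snd p)" and SA: "S \<subseteq> span_over E A" and S: "lin_indep_over E S"
  shows "lin_indep_over (span_over E B) S"
  unfolding lin_indep_over_def
proof (intro conjI allI impI ballI)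
  show fS: "finite S" using S by (rule indep_finite)
  fix lam s0 assume lam: "\<forall>s\<in>S. lam s \<in> span_over E B" and sum0: "(\<Sum>s\<in>S. lam s * s) = 0" and s0: "s0 \<in> S"
  have "\<forall>s\<in>S. \<exists>m. (\<forall>a\<in>A. m a \<in> E) \<and> s = (\<Sum>a\<in>A. m a * a)"
    using SA unfolding span_over_def by blast
  then obtain m where m: "\<And>s. s \<in> S \<Longrightarrow> (\<forall>a\<in>A. m s a \<in> E) \<and> s = (\<Sum>a\<in>A. m s a * a)"
    using bchoice[of S] by metis
  have "\<forall>s\<in>S. \<exists>l. (\<forall>b\<in>B. l b \<in> E) \<and> lam s = (\<Sum>b\<in>B. l b * b)"
    using lam unfolding span_over_def by blast
  then obtain l where l: "\<And>s. s \<in> S \<Longrightarrow> (\<forall>b\<in>B. l s b \<in> E) \<and> lam s = (\<Sum>b\<in>B. l s b * b)"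
    using bchoice[of S] by metis
  define co where "co p = (\<Sum>s\<in>S. l s (snd p) * m s (fst p))" for p :: "'a \<times> 'a"
  have "(\<Sum>s\<in>S. lam s * s) = (\<Sum>s\<in>S. \<Sum>a\<in>A. \<Sum>b\<in>B. (l s b * m s a) * (a * b))"
  proof (rule sum.cong[OF refl])
    fix s assume s: "s \<in> S"
    have "lam s * s = (\<Sum>b\<in>B. l s b * b) * (\<Sum>a\<in>A. m s a * a)" using l[OF s] m[OF s] by simp
    also have "\<dots> = (\<Sum>b\<in>B. \<Sum>a\<in>A. (l s b * b) * (m s a * a))" by (rule sum_product)
    also have "\<dots> = (\<Sum>a\<in>A. \<Sum>b\<in>B. (l s b * m s a) * (a * b))" by (subst sum.swap) (simp add: ac_simps)
    finally show "lam s * s = (\<Sum>a\<in>A. \<Sum>b\<in>B. (l s b * m s a) * (a * b))" .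
  qed
  also have "\<dots> = (\<Sum>a\<in>A. \<Sum>b\<in>B. \<Sum>s\<in>S. (l s b * m s a) * (a * b))"
    by (simp add: sum.swap[of _ S] sum.swap[of _ S B])
  also have "\<dots> = (\<Sum>a\<in>A. \<Sum>b\<in>B. co (a, b) * (a * b))"
    by (simp add: co_def sum_distrib_right)
  also have "\<dots> = (\<Sum>p\<in>A \<times> B. co p * (fst p * snd p))"
    by (simp add: sum.cartesian_product case_prod_beta')
  finally have s1: "(\<Sum>p\<in>A \<times> B. co p * (fst p * snd p)) = 0" using sum0 by simp
  have coE: "co p \<in> E" if "p \<in> A \<times> B" for p
    unfolding co_def using that l m by (intro sf_sum[OF E] sf_mult[OF E]) auto
  have co0: "co (a, b) = 0" if "a \<in> A" "b \<in> B" for a b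
    using findepD[OF P coE s1] that by auto
  have lb: "l s b = 0" if b: "b \<in> B" and s: "s \<in> S" for s b
  proof -
    have "(\<Sum>s\<in>S. l s b * s) = (\<Sum>s\<in>S. \<Sum>a\<in>A. (l s b * m s a) * a)"
    proof (rule sum.cong[OF refl])
      fix s assume s: "s \<in> S"
      have "l s b * s = l s b * (\<Sum>a\<in>A. m s a * a)" using m[OF s] by simp
      then show "l s b * s = (\<Sum>a\<in>A. (l s b * m s a) * a)" by (simp add: sum_distrib_left mult.assoc)
    qed
    also have "\<dots> = (\<Sum>a\<in>A. co (a, b) * a)"
      by (subst sum.swap) (simp add: co_def sum_distrib_right)
    also have "\<dots> = 0" using co0 b by simp
    finally have s2: "(\<Sum>s\<in>S. l s b * s) = 0" .
    show ?thesis by (rule lin_indepD[OF S _ s2 s]) (use l b in auto)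
  qed
  show "lam s0 = 0" using l[OF s0] lb[OF _ s0] by simp
qed

lemma pair_indep:
  assumes E: "subfield E" and f: "f \<notin> E"
  shows "lin_indep_over E {1, f}"
  unfolding lin_indep_over_def
proof (intro conjI allI impI ballI)
  show "finite {1, f}" by simp
  have f1: "f \<noteq> 1" using f sf_1[OF E] by auto
  fix c x assume c: "\<forall>b\<in>{1, f}. c b \<in> E" and s: "(\<Sum>b\<in>{1, f}. c b * b) = 0" and x: "x \<in> {1, f}"
  have s': "c 1 + c f * f = 0" using s f1 by simp
  have cf: "c f = 0"
  proof (rule ccontr)
    assume ne: "c f \<noteq> 0"
    have "f = - c 1 / c f" using s' ne by (simp add: field_simps eq_neg_iff_add_eq_0 add.commute)
    moreover have "- c 1 / c f \<in> E" using c by (auto intro!: sf_divide[OF E] sf_uminus[OF E])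
    ultimately show False using f by simp
  qed
  then have "c 1 = 0" using s' by simp
  then show "c x = 0" using x cf by auto
qed

lemma pair_dep:
  assumes E: "subfield E" and F: "subfield F'" and fF: "f \<in> F'" and f: "f \<notin> E"
    and ind: "lin_indep_over F' {1, f}"
  shows False
proof -
  have f1: "f \<noteq> 1" using f sf_1[OF E] by auto
  define c where "c = (\<lambda>x::'a. if x = 1 then f else - 1)"
  have "(\<Sum>b\<in>{1, f}. c b * b) = 0" using f1 by (simp add: c_def)
  then have "c 1 = 0"
    by (rule lin_indepD[OF ind, rotated]) (auto simp: c_def fF sf_uminus[OF F] sf_1[OF F])
  then have "f = 0" by (simp add: c_def)
  then show False using f sf_0[OF E] by simp
qed

lemma degree_self:
  assumes K: "subfield K"
  shows "ext_degree K K = 1"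
proof -
  have "is_basis_over K K {1}" unfolding is_basis_over_def
  proof (intro conjI)
    show "finite {1}" by simp
    show "{1} \<subseteq> K" using sf_1[OF K] by simp
    show "lin_indep_over K {1}" unfolding lin_indep_over_def by simp
    show "span_over K {1} = K"
    proof
      show "span_over K {1} \<subseteq> K" unfolding span_over_def by auto
      show "K \<subseteq> span_over K {1}"
      proof
        fix k assume "k \<in> K"
        then show "k \<in> span_over K {1}" by (intro span_memI[of "{1}" "\<lambda>_. k"]) auto
      qed
    qed
  qed
  then show ?thesis using ext_degree_eq[OF K] by simp
qed



theorem theorem8p2:
  fixes K K' L M :: "'a::field set" and d :: nat
  assumes closure: "is_alg_closure_of K"
    and K'_gal: "galois_ext K K'"
    and mag: "\<exists>F. scm_via K L M F \<and> F \<noteq> K \<and> ext_degree K F = d"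
    and disj: "lin_disjoint K (galois_closure K M) K'"
  shows "(\<exists>F. scm_via K' (compositum L K') (compositum M K') F \<and> F \<noteq> K' \<and> ext_degree K' F = d)
    \<and> (\<exists>F. scm_via K M (compositum M K') F \<and> (ext_degree K K' > 1 \<longrightarrow> F \<noteq> K))
    \<and> (\<exists>F. scm_via K L (compositum L K') F \<and> (ext_degree K K' > 1 \<longrightarrow> F \<noteq> K))"
proof -
  obtain F where scm: "scm_via K L M F" and FK: "F \<noteq> K" and dF: "ext_degree K F = d" using mag by blast
  have Lfe: "finite_ext K L" and Mfe: "finite_ext K M" and LM: "L \<subseteq> M" and degL: "ext_degree K L > 2"
    and FG: "galois_ext K F" and disjLF: "lin_disjoint K (galois_closure K L) F" and LFM: "compositum L F = M"
    using scm by (auto simp: scm_via_def)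
  have K: "subfield K" and alg: "\<forall>x. algebraic_over K x"
    using closure by (auto simp: is_alg_closure_of_def perfect_field_def)
  have K'fe: "finite_ext K K'" using K'_gal by (simp add: galois_ext_def)
  have K': "subfield K'" and KK': "K \<subseteq> K'" using K'fe by (auto simp: finite_ext_def)
  obtain C where C: "is_basis_over K K' C" using K'fe by (auto simp: finite_ext_def)
  have Ffe: "finite_ext K F" using FG by (simp add: galois_ext_def)
  have Fsf: "subfield F" and KF: "K \<subseteq> F" using Ffe by (auto simp: finite_ext_def)
  obtain BF where BF: "is_basis_over K F BF" using Ffe by (auto simp: finite_ext_def)
  have Lsf: "subfield L" and KL: "K \<subseteq> L" using Lfe by (auto simp: finite_ext_def)
  obtain BL where BL: "is_basis_over K L BL" using Lfe by (auto simp: finite_ext_def)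
  have Msf: "subfield M" and KM: "K \<subseteq> M" using Mfe by (auto simp: finite_ext_def)
  obtain BM where BM: "is_basis_over K M BM" using Mfe by (auto simp: finite_ext_def)
  define Mt where "Mt = galois_closure K M"
  define Lt where "Lt = galois_closure K L"
  have MMt: "M \<subseteq> Mt" by (simp add: Mt_def gc_sub)
  have LtMt: "Lt \<subseteq> Mt" by (simp add: Mt_def Lt_def gc_mono[OF LM])
  have LLt: "L \<subseteq> Lt" by (simp add: Lt_def gc_sub)
  have FM: "F \<subseteq> M" using compositum_sub2[of F L] LFM by simp
  have Mtsf: "subfield Mt" by (simp add: Mt_def gc_subfield)
  have disj': "lin_indep_over K' S" if "S \<subseteq> Mt" "lin_indep_over K S" for S
    using disj that unfolding lin_disjoint_def Mt_def by blast
  obtain f where fF: "f \<in> F" and fK: "f \<notin> K" using FK KF by blast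
  have "\<exists>N0. galois_ext K N0 \<and> L \<subseteq> N0"
  proof (rule ccontr)
    assume "\<not> ?thesis"
    then have "Lt = UNIV" unfolding Lt_def galois_closure_def by auto
    then have "lin_indep_over F {1, f}" using disjLF pair_indep[OF K fK] unfolding lin_disjoint_def Lt_def by auto
    then show False by (rule pair_dep[OF K Fsf fF fK])
  qed
  then obtain N0 where N0: "galois_ext K N0" "L \<subseteq> N0" by blast
  have LtG: "galois_ext K Lt" unfolding Lt_def by (rule gc_galois[OF K alg N0])
  have Ltfe: "finite_ext K Lt" using LtG by (simp add: galois_ext_def)
  have Ltsf: "subfield Lt" using Ltfe by (simp add: finite_ext_def)
  obtain A where A: "is_basis_over K Lt A" using Ltfe by (auto simp: finite_ext_def)
  have BFK': "lin_indep_over K' BF" using disj' basis_sub[OF BF] basis_indep[OF BF] FM MMt by blast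
  have BLK': "lin_indep_over K' BL" using disj' basis_sub[OF BL] basis_indep[OF BL] LM MMt by blast
  have BMK': "lin_indep_over K' BM" using disj' basis_sub[OF BM] basis_indep[OF BM] MMt by blast
  have AK': "lin_indep_over K' A" using disj' basis_sub[OF A] basis_indep[OF A] LtMt by blast
  note beL = basis_ext[OF K K' KK' BL Lsf alg BLK']
  note beM = basis_ext[OF K K' KK' BM Msf alg BMK']
  note beF = basis_ext[OF K K' KK' BF Fsf alg BFK']
  note beLt = basis_ext[OF K K' KK' A Ltsf alg AK']
  define LK where "LK = compositum L K'"
  define MK where "MK = compositum M K'"
  define FK' where "FK' = compositum F K'"
  define LtK where "LtK = compositum Lt K'"
  have FK'G: "galois_ext K' FK'" unfolding FK'_def by (rule base_change_galois[OF K K' KK' FG BF BFK' C alg])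
  have LtKG: "galois_ext K' LtK" unfolding LtK_def by (rule base_change_galois[OF K K' KK' LtG A AK' C alg])
  have LKLtK: "LK \<subseteq> LtK" unfolding LK_def LtK_def by (rule compositum_mono[OF LLt order_refl])
  have gcsub: "galois_closure K' LK \<subseteq> LtK" by (rule gc_least[OF LtKG LKLtK])
  have Fi: "lin_indep_over F A" using disjLF basis_sub[OF A] basis_indep[OF A] unfolding lin_disjoint_def Lt_def by blast
  have fiK: "findep K (A \<times> BF) (\<lambda>p. fst p * snd p)"
    by (rule prod_indep[OF K Fsf KF Fi basis_sub[OF BF] basis_indep[OF BF]])
  have injP: "inj_on (\<lambda>p. fst p * snd p) (A \<times> BF)" by (rule findep_inj[OF fiK K])
  have Psub: "(\<lambda>p. fst p * snd p) ` (A \<times> BF) \<subseteq> Mt"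
  proof
    fix x assume "x \<in> (\<lambda>p. fst p * snd p) ` (A \<times> BF)"
    then obtain a b where ab: "a \<in> A" "b \<in> BF" "x = a * b" by auto
    have "a \<in> Mt" "b \<in> Mt" using ab basis_sub[OF A] basis_sub[OF BF] LtMt FM MMt by auto
    then show "x \<in> Mt" using ab(3) sf_mult[OF Mtsf] by simp
  qed
  have fiK': "findep K' (A \<times> BF) (\<lambda>p. fst p * snd p)"
    using disj'[OF Psub] fiK findep_image[OF injP] by simp
  have LtK_FK: "lin_disjoint K' LtK FK'"
    unfolding lin_disjoint_def
  proof (intro allI impI)
    fix S assume S: "S \<subseteq> LtK" "lin_indep_over K' S"
    have "S \<subseteq> span_over K' A" using S(1) beLt(3) by (simp add: LtK_def)
    then have "lin_indep_over (span_over K' BF) S"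
      by (rule disj_base[OF K' basis_finite[OF A] basis_finite[OF BF] fiK' _ S(2)])
    then show "lin_indep_over FK' S" using beF(3) by (simp add: FK'_def)
  qed
  have disjK': "lin_disjoint K' (galois_closure K' LK) FK'" by (rule lin_disjoint_mono[OF LtK_FK gcsub])
  have compeq: "compositum LK FK' = MK"
  proof (rule subset_antisym)
    show "compositum LK FK' \<subseteq> MK" unfolding LK_def FK'_def MK_def
      by (rule compositum_least[OF compositum_subfield compositum_mono[OF LM order_refl] compositum_mono[OF FM order_refl]])
    have sub1: "LK \<subseteq> compositum LK FK'" and sub2: "FK' \<subseteq> compositum LK FK'"
      by (simp_all add: compositum_sub1 compositum_sub2)
    have "M \<subseteq> compositum LK FK'" unfolding LFM[symmetric]
      using compositum_least[OF compositum_subfield, of L LK FK' F] sub1 sub2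
        compositum_sub1[of L K'] compositum_sub1[of F K'] by (auto simp: LK_def FK'_def)
    moreover have "K' \<subseteq> compositum LK FK'" using sub1 compositum_sub2[of K' L] by (auto simp: LK_def)
    ultimately show "MK \<subseteq> compositum LK FK'" unfolding MK_def by (rule compositum_least[OF compositum_subfield])
  qed
  have FKne: "FK' \<noteq> K'"
  proof
    assume eq: "FK' = K'"
    have fK': "f \<in> K'" using fF compositum_sub1[of F K'] eq by (auto simp: FK'_def)
    have "{1, f} \<subseteq> Mt" using fF sf_1[OF Fsf] FM MMt by auto
    then have "lin_indep_over K' {1, f}" using disj' pair_indep[OF K fK] by blast
    then show False by (rule pair_dep[OF K K' fK' fK])
  qed
  have degFK: "ext_degree K' FK' = d"
    using ext_degree_eq[OF K' beF(1)] ext_degree_eq[OF K BF] dF by (simp add: FK'_def)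
  have degLK: "ext_degree K' LK > 2"
    using ext_degree_eq[OF K' beL(1)] ext_degree_eq[OF K BL] degL by (simp add: LK_def)
  have LKMK: "LK \<subseteq> MK" unfolding LK_def MK_def by (rule compositum_mono[OF LM order_refl])
  have goal1: "scm_via K' LK MK FK' \<and> FK' \<noteq> K' \<and> ext_degree K' FK' = d"
    unfolding scm_via_def using beL(2) beM(2) LKMK degLK FK'G disjK' compeq FKne degFK
    by (simp add: LK_def MK_def)
  have K'ne: "ext_degree K K' > 1 \<longrightarrow> K' \<noteq> K" using degree_self[OF K] by auto
  have tow: "finite_ext K (compositum X K')" if X: "is_basis_over K' (compositum X K') BX" for X BX
  proof -
    have "is_basis_over K (compositum X K') ((\<lambda>p. fst p * snd p) ` (BX \<times> C))"
      by (rule tower[OF K K' compositum_subfield KK' compositum_sub2 X C])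
    then show ?thesis unfolding finite_ext_def using K compositum_subfield KK' compositum_sub2[of K' X] by blast
  qed
  have MKfe: "finite_ext K MK" unfolding MK_def by (rule tow[OF beM(1)])
  have LKfe: "finite_ext K LK" unfolding LK_def by (rule tow[OF beL(1)])
  have degM: "ext_degree K M > 2"
  proof -
    have "card BL \<le> card BM"
      by (rule indep_card_le[OF K BM _ basis_indep[OF BL]]) (use basis_sub[OF BL] LM in auto)
    then show ?thesis using ext_degree_eq[OF K BM] ext_degree_eq[OF K BL] degL by simp
  qed
  have goal2: "scm_via K M MK K'"
    unfolding scm_via_def using Mfe MKfe compositum_sub1[of M K'] degM K'_gal disj
    by (simp add: MK_def)
  have disjL: "lin_disjoint K (galois_closure K L) K'"
    by (rule lin_disjoint_mono[OF disj]) (simp add: gc_mono[OF LM])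
  have goal3: "scm_via K L LK K'"
    unfolding scm_via_def using Lfe LKfe compositum_sub1[of L K'] degL K'_gal disjL
    by (simp add: LK_def)
  show ?thesis using goal1 goal2 goal3 K'ne unfolding LK_def MK_def by blast
qed


end
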